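(* Consider minimizing $f:\mathbb{R}^n\to\mathbb{R}$ by a generalized pattern search algorithm, at iteration $k$ with current iterate $x_k$ and mesh $M_k$. Let $X=\{x_j\}_{j=0}^{N-1}\subseteq M_k$ be a set of $N$ mesh points, $t$ of which are improved mesh points (i.e. $f(x_j)<f(x_k)$). Run the Quantum Search Step (described in the context) on $X$ with tolerance $\tau>0$. Then exactly one of the following holds: (i) the quantum search step returns an improved mesh point using $\Theta\left(\sqrt{N/t}\right)$ calls to the quantum oracle $F$; (ii) the quantum search step terminates without finding the next iterate. Moreover, if $X$ contains an improved mesh point, the probability of the quantum search step terminating without finding the next iterate can be made arbitrarily low (by the choice of $\tau$).
   Context: Generalized pattern search: the mesh at iteration $k$ is $M_k=\{x_k+\Delta_k Dz: z\in\mathbb{N}^p\}$, where $\Delta_k>0$ and $D$ is an $n\times p$ real matrix whose columns positively span $\mathbb{R}^n$ and are of the form $Gz_i$ for a nonsingular $G\in\mathbb{R}^{n\times n}$ and $z_i\in\mathbb{Z}^n$. A point $y\in M_k$ is an improved mesh point if $f(y)<f(x_k)$. Points and function values are encoded as fixed-point two's complement bit strings in qubit registers (each coordinate with $d$ bits), and one assumes a quantum oracle $F$ with $F\ket{x}\ket{0}=\ket{x}\ket{f(x)}$, acting linearly on superpositions. Write $f_j=f(x_j)$, $f_k=f(x_k)$. The algorithm $\mathcal{A}$ acts on three registers: it places the third register in $\ket{-f_k}$, puts the first register into the uniform superposition $\frac{1}{\sqrt N}\sum_j\ket{x_j}$, applies $F$ to the first two registers, and adds the second register into the third (in-place signed quantum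 addition), giving $\mathcal{A}\ket{0}\ket{0}\ket{0}=\frac{1}{\sqrt N}\sum_{j=0}^{N-1}\ket{x_j}\ket{f_j}\ket{f_j-f_k}$. Desired states are those basis states with $f_j-f_k<0$ (sign bit of the third register equal to $1$). $S_0$ negates the all-zeros basis state and fixes all others; $S_\chi$ negates desired basis states and fixes all others; $Q=-\mathcal{A}S_0\mathcal{A}^{-1}S_\chi$. Modified QSearch with tolerance $\tau>0$: set $l=0$, $u=0$, fix $1<c<2$. Prepare $\mathcal{A}\ket{0}$ and measure; if desired, return it. While no desired state has been returned and $u<\ln(\tau)/\ln(3/4)$: increase $l$ by 1, set $M=\lceil c^l\rceil$; if $M>\sqrt N$ increase $u$ by 1; prepare $\mathcal{A}\ket{0}$, choose $j$ uniformly from the integers in $[1,M]$, apply $Q$ $j$ times, measure, and return the state if it is desired. If the loop ends without a desired state, report failure. Quantum Search Step: apply modified QSearch to three registers initialized to $\ket{0}\ket{0}\ket{0}$; if it returns an improved mesh point $x'$, set $x_{k+1}=x'$ (and update the mesh size parameter); otherwise terminate and report failure to find an improved mesh point. *)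

theory Defs
  imports "HOL-Probability.Probability"
begin

definition col :: "real^'p^'n \<Rightarrow> 'p \<Rightarrow> real^'n" where
  "col D j = (\<chi> i. D $ i $ j)"

definition positively_spanning :: "real^'p^'n \<Rightarrow> bool" where
  "positively_spanning D \<longleftrightarrow>
     (\<forall>v. \<exists>lam::'p \<Rightarrow> real. (\<forall>j. 0 \<le> lam j) \<and> v = (\<Sum>j\<in>UNIV. lam j *\<^sub>R col D j))"

definition gps_directions :: "real^'p^'n \<Rightarrow> real^'n^'n \<Rightarrow> ('p \<Rightarrow> int^'n) \<Rightarrow> bool" where
  "gps_directions D G zs \<longleftrightarrow> positively_spanning D \<and> invertible G \<and>
     (\<forall>j. col D j = G *v (\<chi> i. real_of_int (zs j $ i)))"

definition gps_mesh :: "real^'n \<Rightarrow> real \<Rightarrow> real^'p^'n \<Rightarrow> (real^'n) set" where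
  "gps_mesh xk \<Delta> D = {xk + \<Delta> *\<^sub>R (D *v z) | z. \<forall>j. z $ j \<in> \<nat>}"

text \<open>A d-bit two's complement register is identified with the integer it denotes,
  a value in [-2^(d-1), 2^(d-1)); its sign bit is 1 iff that integer is negative.
  Fixed-point with q fractional bits: the code c denotes the real c / 2^q.\<close>
definition tc_range :: "nat \<Rightarrow> int set" where
  "tc_range d = {-(2^(d-1)) ..< 2^(d-1)}"

definition sign_bit :: "int \<Rightarrow> bool" where
  "sign_bit v \<longleftrightarrow> v < 0"

definition representable :: "nat \<Rightarrow> nat \<Rightarrow> real \<Rightarrow> bool" where
  "representable d q r \<longleftrightarrow> (\<exists>c\<in>tc_range d. r = real_of_int c / 2^q)"

definition fx_code :: "nat \<Rightarrow> real \<Rightarrow> int" where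
  "fx_code q r = \<lfloor>r * 2^q\<rfloor>"

definition fx_decode_vec :: "nat \<Rightarrow> int^'n \<Rightarrow> real^'n" where
  "fx_decode_vec q p = (\<chi> i. real_of_int (p $ i) / 2^q)"

text \<open>Computational basis states of the three registers: (point register, value register,
  value register).\<close>
type_synonym 'n qbasis = "(int^'n) \<times> int \<times> int"

definition qbasis_set :: "nat \<Rightarrow> ('n::finite) qbasis set" where
  "qbasis_set d = {(p,a,b). (\<forall>i. p $ i \<in> tc_range d) \<and> a \<in> tc_range d \<and> b \<in> tc_range d}"

type_synonym 'n qstate = "'n qbasis \<Rightarrow> complex"

definition supported_in :: "'b set \<Rightarrow> ('b \<Rightarrow> complex) \<Rightarrow> bool" where
  "supported_in B v \<longleftrightarrow> (\<forall>b. b \<notin> B \<longrightarrow> v b = 0)"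

definition ket :: "'b \<Rightarrow> 'b \<Rightarrow> complex" where
  "ket b = (\<lambda>b'. if b' = b then 1 else 0)"

definition ket0 :: "('n::finite) qstate" where
  "ket0 = ket (0, 0, 0)"

definition unitary_on :: "'b set \<Rightarrow> (('b \<Rightarrow> complex) \<Rightarrow> ('b \<Rightarrow> complex))
    \<Rightarrow> (('b \<Rightarrow> complex) \<Rightarrow> ('b \<Rightarrow> complex)) \<Rightarrow> bool" where
  "unitary_on B A Ainv \<longleftrightarrow>
    (\<forall>v. supported_in B v \<longrightarrow>
        supported_in B (A v) \<and> supported_in B (Ainv v) \<and> Ainv (A v) = v \<and> A (Ainv v) = v \<and>
        (\<Sum>b\<in>B. (cmod (A v b))^2) = (\<Sum>b\<in>B. (cmod (v b))^2)) \<and>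
    (\<forall>v w a. supported_in B v \<longrightarrow> supported_in B w \<longrightarrow>
        A (\<lambda>b. a * v b + w b) = (\<lambda>b. a * A v b + A w b))"

text \<open>Basis state |x_j>|f_j>|f_j - f_k>: third register = |-f_k> plus (in place) |f_j>.\<close>
definition enc_basis :: "nat \<Rightarrow> (real^'n \<Rightarrow> real) \<Rightarrow> real^'n \<Rightarrow> real^'n \<Rightarrow> ('n::finite) qbasis" where
  "enc_basis q f xk x =
     ((\<chi> i. fx_code q (x $ i)), fx_code q (f x), fx_code q (- f xk) + fx_code q (f x))"

definition qss_state :: "nat \<Rightarrow> (real^'n \<Rightarrow> real) \<Rightarrow> real^'n \<Rightarrow> (nat \<Rightarrow> real^'n) \<Rightarrow> nat \<Rightarrow> ('n::finite) qstate" where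
  "qss_state q f xk xs N = (\<lambda>b. \<Sum>j<N. complex_of_real (1 / sqrt (real N)) * ket (enc_basis q f xk (xs j)) b)"

definition desired :: "('n::finite) qbasis \<Rightarrow> bool" where
  "desired b \<longleftrightarrow> sign_bit (snd (snd b))"

definition S0 :: "('n::finite) qstate \<Rightarrow> ('n::finite) qstate" where
  "S0 v = (\<lambda>b. if b = (0,0,0) then - v b else v b)"

definition Schi :: "('n::finite) qstate \<Rightarrow> ('n::finite) qstate" where
  "Schi v = (\<lambda>b. if desired b then - v b else v b)"

definition Qop :: "(('n::finite) qstate \<Rightarrow> ('n::finite) qstate) \<Rightarrow> (('n::finite) qstate \<Rightarrow> ('n::finite) qstate) \<Rightarrow> ('n::finite) qstate \<Rightarrow> ('n::finite) qstate" where
  "Qop A Ainv v = (\<lambda>b. - (A (S0 (Ainv (Schi v)))) b)"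

definition measure_basis :: "('b \<Rightarrow> complex) \<Rightarrow> 'b pmf" where
  "measure_basis v = embed_pmf (\<lambda>b. (cmod (v b))^2)"

text \<open>Returns the measured basis state and the number of oracle calls (A and A^-1 each call F once:
  1 for the preparation and 2 per application of Q).\<close>
definition qsearch_round :: "(('n::finite) qstate \<Rightarrow> ('n::finite) qstate) \<Rightarrow> (('n::finite) qstate \<Rightarrow> ('n::finite) qstate) \<Rightarrow> ('n::finite) qstate
    \<Rightarrow> nat \<Rightarrow> (('n::finite) qbasis \<times> nat) pmf" where
  "qsearch_round A Ainv \<psi> M =
     do { j \<leftarrow> pmf_of_set {1..M};
          b \<leftarrow> measure_basis ((Qop A Ainv ^^ j) \<psi>);
          return_pmf (b, 1 + 2 * j) }"

fun qsearch_rounds :: "(('n::finite) qstate \<Rightarrow> ('n::finite) qstate) \<Rightarrow> (('n::finite) qstate \<Rightarrow> ('n::finite) qstate) \<Rightarrow> ('n::finite) qstate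
    \<Rightarrow> nat list \<Rightarrow> (('n::finite) qbasis option \<times> nat) pmf" where
  "qsearch_rounds A Ainv \<psi> [] = return_pmf (None, 0)"
| "qsearch_rounds A Ainv \<psi> (M # Ms) =
     do { (b, k) \<leftarrow> qsearch_round A Ainv \<psi> M;
          if desired b then return_pmf (Some b, k)
          else do { (r, k') \<leftarrow> qsearch_rounds A Ainv \<psi> Ms; return_pmf (r, k + k') } }"

text \<open>u after round l (u is increased in round i iff ceil(c^i) > sqrt N).\<close>
definition u_count :: "real \<Rightarrow> nat \<Rightarrow> nat \<Rightarrow> nat" where
  "u_count c N l = card {i \<in> {1..l}. sqrt (real N) < real_of_int \<lceil>c ^ i\<rceil>}"

text \<open>Number of loop rounds executed (absent success): round l runs iff u after round l-1 is
  < ln tau / ln(3/4), so the rounds are l = 1..R with R the least l where u reaches the bound.\<close>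
definition num_rounds :: "real \<Rightarrow> real \<Rightarrow> nat \<Rightarrow> nat" where
  "num_rounds c \<tau> N = (LEAST l. ln \<tau> / ln (3/4) \<le> real (u_count c N l))"

definition round_params :: "real \<Rightarrow> real \<Rightarrow> nat \<Rightarrow> nat list" where
  "round_params c \<tau> N = map (\<lambda>l. nat \<lceil>c ^ l\<rceil>) [1..<num_rounds c \<tau> N + 1]"

definition modified_qsearch :: "real \<Rightarrow> real \<Rightarrow> nat \<Rightarrow> (('n::finite) qstate \<Rightarrow> ('n::finite) qstate) \<Rightarrow> (('n::finite) qstate \<Rightarrow> ('n::finite) qstate)
    \<Rightarrow> ('n::finite) qstate \<Rightarrow> (('n::finite) qbasis option \<times> nat) pmf" where
  "modified_qsearch c \<tau> N A Ainv \<psi> =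
     do { b \<leftarrow> measure_basis \<psi>;
          if desired b then return_pmf (Some b, 1)
          else do { (r, k) \<leftarrow> qsearch_rounds A Ainv \<psi> (round_params c \<tau> N); return_pmf (r, 1 + k) } }"

definition quantum_search_step :: "real \<Rightarrow> real \<Rightarrow> nat \<Rightarrow> nat \<Rightarrow> (real^'n \<Rightarrow> real) \<Rightarrow> real^'n
    \<Rightarrow> (nat \<Rightarrow> real^'n) \<Rightarrow> nat \<Rightarrow> (('n::finite) qstate \<Rightarrow> ('n::finite) qstate) \<Rightarrow> (('n::finite) qstate \<Rightarrow> ('n::finite) qstate)
    \<Rightarrow> ((real^'n) option \<times> nat) pmf" where
  "quantum_search_step c \<tau> d q f xk xs N A Ainv =
     map_pmf (\<lambda>(r, k). (map_option (\<lambda>b. fx_decode_vec q (fst b)) r, k))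
       (modified_qsearch c \<tau> N A Ainv (qss_state q f xk xs N))"

definition qss_hyps :: "(real^'n \<Rightarrow> real) \<Rightarrow> real^'n \<Rightarrow> real \<Rightarrow> real^'p^'n \<Rightarrow> real^'n^'n
    \<Rightarrow> ('p \<Rightarrow> int^'n) \<Rightarrow> (nat \<Rightarrow> real^'n) \<Rightarrow> nat \<Rightarrow> nat \<Rightarrow> nat
    \<Rightarrow> (('n::finite) qstate \<Rightarrow> ('n::finite) qstate) \<Rightarrow> (('n::finite) qstate \<Rightarrow> ('n::finite) qstate) \<Rightarrow> bool" where
  "qss_hyps f xk \<Delta> D G zs xs N d q A Ainv \<longleftrightarrow>
     0 < \<Delta> \<and> gps_directions D G zs \<and>
     0 < N \<and> inj_on xs {..<N} \<and> xs ` {..<N} \<subseteq> gps_mesh xk \<Delta> D \<and>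
     (\<forall>i. representable d q (xk $ i)) \<and> representable d q (f xk) \<and> representable d q (- f xk) \<and>
     (\<forall>j<N. (\<forall>i. representable d q (xs j $ i)) \<and> representable d q (f (xs j)) \<and>
             representable d q (f (xs j) - f xk)) \<and>
     unitary_on (qbasis_set d) A Ainv \<and> A ket0 = qss_state q f xk xs N"

definition improved_count :: "(real^'n \<Rightarrow> real) \<Rightarrow> real^'n \<Rightarrow> (nat \<Rightarrow> real^'n) \<Rightarrow> nat \<Rightarrow> nat" where
  "improved_count f xk xs N = card {j \<in> {..<N}. f (xs j) < f xk}"

end

theory Submission
  imports Defs
begin

definition pavg :: "(nat \<Rightarrow> real) \<Rightarrow> nat \<Rightarrow> real" where
  "pavg P M = (\<Sum>j\<in>{1..M}. P j) / real M"

fun ecost :: "(nat \<Rightarrow> real) \<Rightarrow> nat list \<Rightarrow> real" where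
  "ecost P [] = 0"
| "ecost P (M # Ms) = (real M + 2) + (1 - pavg P M) * ecost P Ms"

fun fprob :: "(nat \<Rightarrow> real) \<Rightarrow> nat list \<Rightarrow> real" where
  "fprob P [] = 1"
| "fprob P (M # Ms) = (1 - pavg P M) * fprob P Ms"

definition Mseq :: "real \<Rightarrow> nat \<Rightarrow> nat" where "Mseq c l = nat \<lceil>c ^ l\<rceil>"

lemma pavg_bounds:
  assumes P: "\<And>j. 0 \<le> P j \<and> P j \<le> 1"
  shows "0 \<le> pavg P M \<and> pavg P M \<le> 1"
proof -
  have "(\<Sum>j\<in>{1..M}. P j) \<le> (\<Sum>j\<in>{1..M}. 1)" by (rule sum_mono) (use P in auto)
  then have "(\<Sum>j\<in>{1..M}. P j) \<le> real M" by simp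
  moreover have "0 \<le> (\<Sum>j\<in>{1..M}. P j)" by (rule sum_nonneg) (use P in auto)
  ultimately show ?thesis unfolding pavg_def
    by (cases "M = 0") (auto simp: divide_le_eq)
qed

lemma ecost_nonneg:
  assumes P: "\<And>j. 0 \<le> P j \<and> P j \<le> 1"
  shows "0 \<le> ecost P Ms"
proof (induction Ms)
  case Nil then show ?case by simp
next
  case (Cons M Ms)
  have "0 \<le> 1 - pavg P M" using pavg_bounds[OF P] by simp
  then show ?case using Cons by simp
qed

lemma fprob_bounds:
  assumes P: "\<And>j. 0 \<le> P j \<and> P j \<le> 1"
  shows "0 \<le> fprob P Ms \<and> fprob P Ms \<le> 1"
proof (induction Ms)
  case Nil then show ?case by simp
next
  case (Cons M Ms)
  have "0 \<le> 1 - pavg P M" "1 - pavg P M \<le> 1" using pavg_bounds[OF P] by auto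
  then show ?case using Cons by (simp add: mult_le_one)
qed

lemma Mseq_props:
  assumes "1 \<le> c"
  shows "c ^ l \<le> real (Mseq c l)" "real (Mseq c l) \<le> 2 * c ^ l"
    "real (Mseq c l) + 2 \<le> 4 * c ^ l" "1 \<le> Mseq c l"
proof -
  have cl: "1 \<le> c ^ l" using assms by (simp add: one_le_power)
  have e: "real (Mseq c l) = of_int \<lceil>c ^ l\<rceil>" unfolding Mseq_def using cl by simp
  have a: "c ^ l \<le> of_int \<lceil>c ^ l\<rceil>" by simp
  have b: "of_int \<lceil>c ^ l\<rceil> < c ^ l + 1" by linarith
  show "c ^ l \<le> real (Mseq c l)" using e a by simp
  show "real (Mseq c l) \<le> 2 * c ^ l" using e b cl by simp
  show "real (Mseq c l) + 2 \<le> 4 * c ^ l" using e b cl by simp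
  have "1 \<le> real (Mseq c l)" using e a cl by linarith
  then show "1 \<le> Mseq c l" by simp
qed

lemma ecost_upper:
  assumes c: "1 < c" "c < 2" and P: "\<And>j. 0 \<le> P j \<and> P j \<le> 1"
    and Q: "\<And>i. L0 \<le> i \<Longrightarrow> 1 - pavg P (Mseq c i) \<le> (c + 2) / (4 * c)"
  shows "ecost P (map (Mseq c) [m..<n]) \<le>
     (if L0 + 1 \<le> m then 16 / (2 - c) * c ^ m
      else 16 / (2 - c) * c ^ (L0 + 1) + 4 * (c ^ (L0 + 1) - c ^ m) / (c - 1))"
proof (induction "n - m" arbitrary: m)
  case 0
  then have "[m..<n] = []" by simp
  moreover have "0 \<le> 16 / (2 - c) * c ^ m" using c by simp
  moreover have "m \<le> L0 + 1 \<Longrightarrow> c ^ m \<le> c ^ (L0 + 1)" using c power_increasing[of m "L0+1" c] by simp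
  moreover have "0 \<le> 16 / (2 - c) * c ^ (L0 + 1)" using c by simp
  ultimately show ?case using c by (auto simp: not_le)
next
  case (Suc k)
  then have mn: "m < n" by simp
  have IH: "ecost P (map (Mseq c) [Suc m..<n]) \<le>
     (if L0 + 1 \<le> Suc m then 16 / (2 - c) * c ^ Suc m
      else 16 / (2 - c) * c ^ (L0 + 1) + 4 * (c ^ (L0 + 1) - c ^ Suc m) / (c - 1))"
  proof -
    have "k = n - Suc m" using Suc.hyps(2) by simp
    from Suc.hyps(1)[OF this] show ?thesis .
  qed
  define f where "f = 1 - pavg P (Mseq c m)"
  define r where "r = ecost P (map (Mseq c) [Suc m..<n])"
  have f01: "0 \<le> f" "f \<le> 1" unfolding f_def using pavg_bounds[OF P] by auto
  have r0: "0 \<le> r" unfolding r_def by (rule ecost_nonneg[OF P])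
  have eq: "ecost P (map (Mseq c) [m..<n]) = real (Mseq c m) + 2 + f * r"
    using mn by (simp add: upt_conv_Cons f_def r_def)
  have Mm: "real (Mseq c m) + 2 \<le> 4 * c ^ m" using Mseq_props(3) c by simp
  have cm: "0 < c ^ m" using c by simp
  show ?case
  proof (cases "L0 + 1 \<le> m")
    case True
    have fq: "f \<le> (c + 2) / (4 * c)" unfolding f_def using Q True by simp
    have rb: "r \<le> 16 / (2 - c) * c ^ Suc m" using IH True unfolding r_def by simp
    have "f * r \<le> (c + 2) / (4 * c) * (16 / (2 - c) * c ^ Suc m)"
      by (rule mult_mono[OF fq rb]) (use c r0 in auto)
    also have "\<dots> = (c + 2) * 4 / (2 - c) * c ^ m" using c by (simp add: field_simps)
    finally have "real (Mseq c m) + 2 + f * r \<le> 4 * c ^ m + (c + 2) * 4 / (2 - c) * c ^ m"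
      using Mm by linarith
    also have "\<dots> = 16 / (2 - c) * c ^ m" using c by (simp add: field_simps)
    finally show ?thesis using eq True by simp
  next
    case False
    have rb: "r \<le> 16 / (2 - c) * c ^ (L0 + 1) + 4 * (c ^ (L0 + 1) - c ^ Suc m) / (c - 1)"
    proof (cases "L0 + 1 \<le> Suc m")
      case True
      then have "Suc m = L0 + 1" using False by simp
      then show ?thesis using IH unfolding r_def by simp
    next
      case False
      then show ?thesis using IH unfolding r_def by simp
    qed
    have "f * r \<le> r" using f01 r0 by (simp add: mult_left_le_one_le)
    then have "real (Mseq c m) + 2 + f * r \<le> 4 * c ^ m + 16 / (2 - c) * c ^ (L0 + 1) + 4 * (c ^ (L0 + 1) - c ^ Suc m) / (c - 1)"
      using Mm rb by linarith
    also have "\<dots> = 16 / (2 - c) * c ^ (L0 + 1) + 4 * (c ^ (L0 + 1) - c ^ m) / (c - 1)"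
      using c by (simp add: field_simps)
    finally show ?thesis using eq False by simp
  qed
qed

lemma fprob_upper:
  assumes P: "\<And>j. 0 \<le> P j \<and> P j \<le> 1" and q: "0 \<le> q"
    and Q: "\<And>i. L0 \<le> i \<Longrightarrow> 1 - pavg P (Mseq c i) \<le> q"
  shows "fprob P (map (Mseq c) [m..<n]) \<le> q ^ (n - max m L0)"
proof (induction "n - m" arbitrary: m)
  case 0
  then show ?case by simp
next
  case (Suc k)
  then have mn: "m < n" by simp
  have IH: "fprob P (map (Mseq c) [Suc m..<n]) \<le> q ^ (n - max (Suc m) L0)" using Suc by simp
  define f where "f = 1 - pavg P (Mseq c m)"
  define r where "r = fprob P (map (Mseq c) [Suc m..<n])"
  have f01: "0 \<le> f" "f \<le> 1" unfolding f_def using pavg_bounds[OF P] by auto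
  have r0: "0 \<le> r" unfolding r_def using fprob_bounds[OF P] by simp
  have eq: "fprob P (map (Mseq c) [m..<n]) = f * r"
    using mn by (simp add: upt_conv_Cons f_def r_def)
  show ?case
  proof (cases "L0 \<le> m")
    case True
    have "f \<le> q" unfolding f_def using Q True by simp
    moreover have "r \<le> q ^ (n - Suc m)" using IH True unfolding r_def by simp
    ultimately have "f * r \<le> q * q ^ (n - Suc m)" by (rule mult_mono) (use q r0 in auto)
    also have "\<dots> = q ^ (n - m)" using mn by (simp add: power_Suc[symmetric] Suc_diff_Suc)
    finally show ?thesis using eq True by simp
  next
    case False
    have "f * r \<le> r" using f01 r0 by (simp add: mult_left_le_one_le)
    moreover have "max (Suc m) L0 = max m L0" using False by simp
    ultimately show ?thesis using eq IH unfolding r_def by simp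
  qed
qed

lemma ecost_lower:
  assumes P: "\<And>j. 0 \<le> P j \<and> P j \<le> 1" and c: "1 \<le> c"
  shows "m \<le> l \<Longrightarrow> l < n \<Longrightarrow>
    (1 - (\<Sum>i\<in>{m..<l}. pavg P (Mseq c i))) * c ^ l \<le> ecost P (map (Mseq c) [m..<n])"
proof (induction "n - m" arbitrary: m)
  case 0
  then show ?case by simp
next
  case (Suc k)
  then have mn: "m < n" by simp
  define f where "f = 1 - pavg P (Mseq c m)"
  define r where "r = ecost P (map (Mseq c) [Suc m..<n])"
  have f01: "0 \<le> f" "f \<le> 1" unfolding f_def using pavg_bounds[OF P] by auto
  have r0: "0 \<le> r" unfolding r_def by (rule ecost_nonneg[OF P])
  have eq: "ecost P (map (Mseq c) [m..<n]) = real (Mseq c m) + 2 + f * r"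
    using mn by (simp add: upt_conv_Cons f_def r_def)
  show ?case
  proof (cases "m = l")
    case True
    have "c ^ l \<le> real (Mseq c m)" using Mseq_props(1)[OF c] True by simp
    moreover have "0 \<le> f * r" using f01 r0 by simp
    ultimately show ?thesis using eq True by simp
  next
    case False
    then have ml: "m < l" using Suc by simp
    define S where "S = (\<Sum>i\<in>{Suc m..<l}. pavg P (Mseq c i))"
    have S0: "0 \<le> S" unfolding S_def by (rule sum_nonneg) (use pavg_bounds[OF P] in auto)
    have IH: "(1 - S) * c ^ l \<le> r" using Suc ml unfolding S_def r_def by simp
    have sumeq: "(\<Sum>i\<in>{m..<l}. pavg P (Mseq c i)) = (1 - f) + S"
      using ml unfolding S_def f_def by (simp add: sum.atLeast_Suc_lessThan)
    have cl: "0 \<le> c ^ l" using c by simp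
    have "(1 - ((1 - f) + S)) * c ^ l \<le> f * ((1 - S) * c ^ l)"
    proof -
      have "f * S \<le> S" using f01 S0 by (simp add: mult_left_le_one_le)
      then have "(1 - ((1 - f) + S)) \<le> f * (1 - S)" by (simp add: algebra_simps)
      then show ?thesis using cl by (metis mult.assoc mult_right_mono)
    qed
    also have "\<dots> \<le> f * r" using IH f01 by (simp add: mult_left_mono)
    also have "\<dots> \<le> ecost P (map (Mseq c) [m..<n])" using eq by simp
    finally show ?thesis using sumeq by simp
  qed
qed

lemma two_sin_cos: "2 * sin x * cos y = sin (y + x) - sin (y - (x::real))"
  by (simp add: sin_add sin_diff)

lemma two_sin_cos_unused: "2 * sin x * cos (y::real) = sin (y + x) - sin (y - x)"
  by (simp add: sin_add sin_diff)

lemma sin_cos_telescope: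
  "2 * sin x * (\<Sum>j\<in>{1..M}. cos ((2 * real j + 1) * x)) = sin ((2 * real M + 2) * x) - sin (2 * x)"
proof (induction M)
  case 0 then show ?case by simp
next
  case (Suc M)
  have "2 * sin x * cos ((2 * real (Suc M) + 1) * x) =
      sin ((2 * real (Suc M) + 1) * x + x) - sin ((2 * real (Suc M) + 1) * x - x)"
    by (rule two_sin_cos)
  also have "(2 * real (Suc M) + 1) * x + x = (2 * real (Suc M) + 2) * x" by (simp add: algebra_simps)
  also have "(2 * real (Suc M) + 1) * x - x = (2 * real M + 2) * x" by (simp add: algebra_simps)
  finally have h: "2 * sin x * cos ((2 * real (Suc M) + 1) * x) =
      sin ((2 * real (Suc M) + 2) * x) - sin ((2 * real M + 2) * x)" .
  have "2 * sin x * (\<Sum>j\<in>{1..Suc M}. cos ((2 * real j + 1) * x)) =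
      2 * sin x * (\<Sum>j\<in>{1..M}. cos ((2 * real j + 1) * x)) + 2 * sin x * cos ((2 * real (Suc M) + 1) * x)"
    by (simp add: algebra_simps)
  then show ?case using Suc h by simp
qed

lemma abs_sin_mult: "\<bar>sin (real n * x)\<bar> \<le> real n * \<bar>sin x\<bar>"
proof (induction n)
  case 0 then show ?case by simp
next
  case (Suc n)
  have "sin (real (Suc n) * x) = sin (real n * x) * cos x + cos (real n * x) * sin x"
    by (simp add: distrib_right sin_add)
  then have "\<bar>sin (real (Suc n) * x)\<bar> \<le> \<bar>sin (real n * x)\<bar> * \<bar>cos x\<bar> + \<bar>cos (real n * x)\<bar> * \<bar>sin x\<bar>"
    by (simp add: abs_mult[symmetric] abs_triangle_ineq)
  also have "\<dots> \<le> \<bar>sin (real n * x)\<bar> * 1 + 1 * \<bar>sin x\<bar>"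
    by (intro add_mono mult_mono) auto
  finally show ?case using Suc by (simp add: algebra_simps)
qed

lemma pavg_sin_upper:
  assumes M: "1 \<le> M" and s2: "0 < sin (2 * th)"
  shows "1 - pavg (\<lambda>j. (sin ((2 * real j + 1) * th))\<^sup>2) M \<le> 1/2 + 1 / (2 * real M * sin (2 * th))"
proof -
  define C where "C = (\<Sum>j\<in>{1..M}. cos ((2 * real j + 1) * (2 * th)))"
  have sq: "(sin ((2 * real j + 1) * th))\<^sup>2 = 1/2 - cos ((2 * real j + 1) * (2 * th)) / 2" for j
  proof -
    have e: "(2 * real j + 1) * (2 * th) = 2 * ((2 * real j + 1) * th)" by simp
    have "cos ((2 * real j + 1) * (2 * th)) = 1 - 2 * (sin ((2 * real j + 1) * th))\<^sup>2"
      by (subst e) (rule cos_double_sin)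
    then show ?thesis by linarith
  qed
  have sumeq: "(\<Sum>j\<in>{1..M}. (sin ((2 * real j + 1) * th))\<^sup>2) = real M / 2 - C / 2"
    unfolding sq C_def by (simp add: sum_subtractf sum_divide_distrib)
  have "2 * sin (2 * th) * C = sin ((2 * real M + 2) * (2 * th)) - sin (2 * (2 * th))"
    unfolding C_def by (rule sin_cos_telescope)
  then have "\<bar>2 * sin (2 * th) * C\<bar> \<le> 2"
    using abs_sin_le_one[of "(2 * real M + 2) * (2 * th)"] abs_sin_le_one[of "2 * (2 * th)"] by linarith
  then have "2 * sin (2 * th) * C \<le> 2" by linarith
  then have Cb: "C \<le> 1 / sin (2 * th)" using s2 by (simp add: field_simps)
  have "1 - pavg (\<lambda>j. (sin ((2 * real j + 1) * th))\<^sup>2) M = 1/2 + C / (2 * real M)"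
    unfolding pavg_def sumeq using M by (simp add: field_simps)
  also have "\<dots> \<le> 1/2 + (1 / sin (2 * th)) / (2 * real M)"
    using divide_right_mono[OF Cb, of "2 * real M"] M by simp
  finally show ?thesis by (simp add: mult.commute)
qed

lemma pavg_sin_lower:
  "pavg (\<lambda>j. (sin ((2 * real j + 1) * th))\<^sup>2) M \<le> (2 * real M + 1)\<^sup>2 * (sin th)\<^sup>2"
proof (cases "M = 0")
  case True then show ?thesis by (simp add: pavg_def)
next
  case False
  have t: "(sin ((2 * real j + 1) * th))\<^sup>2 \<le> (2 * real M + 1)\<^sup>2 * (sin th)\<^sup>2" if "j \<in> {1..M}" for j
  proof -
    have "\<bar>sin (real (2 * j + 1) * th)\<bar> \<le> real (2 * j + 1) * \<bar>sin th\<bar>" by (rule abs_sin_mult)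
    also have "\<dots> \<le> (2 * real M + 1) * \<bar>sin th\<bar>" using that by (intro mult_right_mono) auto
    finally have "\<bar>sin ((2 * real j + 1) * th)\<bar> \<le> (2 * real M + 1) * \<bar>sin th\<bar>" by (simp add: add.commute)
    then have "\<bar>sin ((2 * real j + 1) * th)\<bar>\<^sup>2 \<le> ((2 * real M + 1) * \<bar>sin th\<bar>)\<^sup>2"
      by (rule power_mono) simp
    then show ?thesis by (simp add: power_mult_distrib)
  qed
  have "(\<Sum>j\<in>{1..M}. (sin ((2 * real j + 1) * th))\<^sup>2) \<le> (\<Sum>j\<in>{1..M}. (2 * real M + 1)\<^sup>2 * (sin th)\<^sup>2)"
    by (rule sum_mono) (rule t)
  also have "\<dots> = real M * ((2 * real M + 1)\<^sup>2 * (sin th)\<^sup>2)" by simp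
  finally show ?thesis unfolding pavg_def using False by (simp add: field_simps)
qed

lemma finite_qbasis: "finite (qbasis_set d :: ('n::finite) qbasis set)"
proof -
  let ?V = "{p::int^'n. \<forall>i. p $ i \<in> tc_range d}"
  have "?V \<subseteq> vec_lambda ` (PiE UNIV (\<lambda>_. tc_range d))"
  proof
    fix p :: "int^'n" assume "p \<in> ?V"
    then have "vec_nth p \<in> PiE UNIV (\<lambda>_. tc_range d)" by auto
    then show "p \<in> vec_lambda ` (PiE UNIV (\<lambda>_. tc_range d))"
      by (metis image_eqI vec_nth_inverse)
  qed
  moreover have "finite (PiE (UNIV::'n set) (\<lambda>_. tc_range d))"
    by (rule finite_PiE) (auto simp: tc_range_def)
  ultimately have fV: "finite ?V" by (meson finite_imageI finite_subset)
  have "qbasis_set d \<subseteq> ?V \<times> tc_range d \<times> tc_range d" unfolding qbasis_set_def by auto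
  moreover have "finite (?V \<times> tc_range d \<times> tc_range d)" using fV by (simp add: tc_range_def)
  ultimately show ?thesis by (rule finite_subset)
qed

lemma zero_qbasis: "((0::int^'n::finite), (0::int), (0::int)) \<in> qbasis_set d"
  unfolding qbasis_set_def tc_range_def by simp

definition nsq :: "'b set \<Rightarrow> ('b \<Rightarrow> complex) \<Rightarrow> real" where
  "nsq B v = (\<Sum>b\<in>B. (cmod (v b))\<^sup>2)"

definition ipr :: "'b set \<Rightarrow> ('b \<Rightarrow> complex) \<Rightarrow> ('b \<Rightarrow> complex) \<Rightarrow> complex" where
  "ipr B u v = (\<Sum>b\<in>B. u b * cnj (v b))"

lemma cmod_sq_add: "(cmod (z + w))\<^sup>2 = (cmod z)\<^sup>2 + (cmod w)\<^sup>2 + 2 * Re (z * cnj w)"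
  unfolding cmod_power2 by (simp add: algebra_simps power2_eq_square)

lemma nsq_comb:
  "nsq B (\<lambda>b. a * u b + v b) = (cmod a)\<^sup>2 * nsq B u + nsq B v + 2 * Re (a * ipr B u v)"
proof -
  have "nsq B (\<lambda>b. a * u b + v b) = (\<Sum>b\<in>B. (cmod a)\<^sup>2 * (cmod (u b))\<^sup>2 + (cmod (v b))\<^sup>2 + 2 * Re (a * (u b * cnj (v b))))"
    unfolding nsq_def by (intro sum.cong refl) (simp add: cmod_sq_add norm_mult power_mult_distrib mult.assoc)
  also have "\<dots> = (cmod a)\<^sup>2 * nsq B u + nsq B v + 2 * Re (a * ipr B u v)"
    unfolding nsq_def ipr_def by (simp add: sum.distrib sum_distrib_left Re_sum)
  finally show ?thesis .
qed

lemma unitary_norm: "unitary_on B A Ainv \<Longrightarrow> supported_in B v \<Longrightarrow> nsq B (A v) = nsq B v"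
  unfolding unitary_on_def nsq_def by blast

lemma unitary_lin: "unitary_on B A Ainv \<Longrightarrow> supported_in B v \<Longrightarrow> supported_in B w \<Longrightarrow>
   A (\<lambda>b. a * v b + w b) = (\<lambda>b. a * A v b + A w b)"
  unfolding unitary_on_def by blast

lemma supported_comb: "supported_in B v \<Longrightarrow> supported_in B w \<Longrightarrow> supported_in B (\<lambda>b. a * v b + w b)"
  unfolding supported_in_def by auto

lemma unitary_ipr:
  assumes U: "unitary_on B A Ainv" and u: "supported_in B u" and v: "supported_in B v"
  shows "ipr B (A u) (A v) = ipr B u v"
proof -
  have key: "Re (a * ipr B (A u) (A v)) = Re (a * ipr B u v)" for a
  proof -
    have "nsq B (A (\<lambda>b. a * u b + v b)) = nsq B (\<lambda>b. a * u b + v b)"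
      by (rule unitary_norm[OF U supported_comb[OF u v]])
    also have "A (\<lambda>b. a * u b + v b) = (\<lambda>b. a * A u b + A v b)" by (rule unitary_lin[OF U u v])
    finally have "nsq B (\<lambda>b. a * A u b + A v b) = nsq B (\<lambda>b. a * u b + v b)" .
    then show ?thesis unfolding nsq_comb unitary_norm[OF U u] unitary_norm[OF U v] by simp
  qed
  from key[of 1] key[of "\<i>"] show ?thesis by (intro complex_eqI) simp_all
qed

lemma unitary_inv:
  assumes U: "unitary_on B A Ainv" and v: "supported_in B v"
  shows "supported_in B (Ainv v)" "A (Ainv v) = v" "supported_in B (A v)" "Ainv (A v) = v"
  using U v unfolding unitary_on_def by blast+

lemma reflect:
  fixes A Ainv :: "('n::finite) qstate \<Rightarrow> 'n qstate"
  assumes U: "unitary_on (qbasis_set d) A Ainv" and v: "supported_in (qbasis_set d) v"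
  shows "A (S0 (Ainv v)) = (\<lambda>b. v b - 2 * ipr (qbasis_set d) v (A ket0) * A ket0 b)"
proof -
  let ?B = "qbasis_set d :: ('n::finite) qbasis set"
  define w where "w = Ainv v"
  have w: "supported_in ?B w" "A w = v" unfolding w_def using unitary_inv[OF U v] by auto
  have k0: "supported_in ?B ket0" unfolding supported_in_def ket0_def ket_def using zero_qbasis by auto
  have S0w: "S0 w = (\<lambda>b. (- 2 * w (0,0,0)) * ket0 b + w b)"
    unfolding S0_def ket0_def ket_def by auto
  have "ipr ?B w ket0 = (\<Sum>b\<in>?B. if b = (0,0,0) then w (0,0,0) else 0)"
    unfolding ipr_def ket0_def ket_def by (rule sum.cong) auto
  also have "\<dots> = w (0,0,0)"
  proof -
    have z: "(0,0,0) \<in> ?B" by (rule zero_qbasis)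
    have fB: "finite ?B" by (rule finite_qbasis)
    show ?thesis using sum.delta[OF fB, of "(0,0,0)" "\<lambda>_. w (0,0,0)"] z by simp
  qed
  finally have "ipr ?B w ket0 = w (0,0,0)" .
  moreover have "ipr ?B w ket0 = ipr ?B v (A ket0)"
    using unitary_ipr[OF U w(1) k0] w(2) by simp
  ultimately have w0: "w (0,0,0) = ipr ?B v (A ket0)" by simp
  have "A (S0 w) = (\<lambda>b. (- 2 * w (0,0,0)) * A ket0 b + A w b)"
    unfolding S0w by (rule unitary_lin[OF U k0 w(1)])
  then show ?thesis unfolding w_def[symmetric] using w(2) w0 by (auto simp: algebra_simps)
qed

lemma fx_code_repr:
  assumes "representable d q r"
  shows "real_of_int (fx_code q r) = r * 2 ^ q"
proof -
  obtain c where c: "r = real_of_int c / 2 ^ q" using assms unfolding representable_def by blast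
  then have "r * 2 ^ q = real_of_int c" by simp
  then show ?thesis unfolding fx_code_def by simp
qed

locale qss =
  fixes f :: "real^'n::finite \<Rightarrow> real" and xk :: "real^'n" and \<Delta> :: real
    and D :: "real^'p::finite^'n" and G :: "real^'n^'n" and zs :: "'p \<Rightarrow> int^'n"
    and xs :: "nat \<Rightarrow> real^'n" and N d q :: nat
    and A Ainv :: "'n qstate \<Rightarrow> 'n qstate"
  assumes H: "qss_hyps f xk \<Delta> D G zs xs N d q A Ainv"
begin

abbreviation BB :: "'n qbasis set" where "BB \<equiv> qbasis_set d"

definition enc :: "real^'n \<Rightarrow> 'n qbasis" where "enc x = enc_basis q f xk x"
definition Sset :: "'n qbasis set" where "Sset = (\<lambda>j. enc (xs j)) ` {..<N}"
definition Gset :: "'n qbasis set" where "Gset = {b \<in> Sset. desired b}"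
definition Bset :: "'n qbasis set" where "Bset = Sset - Gset"
definition tt :: nat where "tt = improved_count f xk xs N"
definition psi :: "'n qstate" where "psi = qss_state q f xk xs N"
definition vecf :: "real \<Rightarrow> real \<Rightarrow> 'n qstate" where
  "vecf a b = (\<lambda>x. if x \<in> Gset then complex_of_real a else if x \<in> Bset then complex_of_real b else 0)"

lemma Npos: "0 < N" and inj: "inj_on xs {..<N}"
  and repr_x: "\<And>j i. j < N \<Longrightarrow> representable d q (xs j $ i)"
  and repr_f: "\<And>j. j < N \<Longrightarrow> representable d q (f (xs j))"
  and repr_mfk: "representable d q (- f xk)"
  and U: "unitary_on BB A Ainv" and Aket0: "A ket0 = psi"
  using H unfolding qss_hyps_def psi_def by auto

lemma enc_eq: "j < N \<Longrightarrow> j' < N \<Longrightarrow> enc (xs j) = enc (xs j') \<Longrightarrow> j = j'"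
proof -
  assume j: "j < N" "j' < N" and e: "enc (xs j) = enc (xs j')"
  have "xs j $ i = xs j' $ i" for i
  proof -
    from e have "fx_code q (xs j $ i) = fx_code q (xs j' $ i)"
      unfolding enc_def enc_basis_def by (metis (no_types, lifting) fst_conv vec_lambda_beta)
    then have "real_of_int (fx_code q (xs j $ i)) = real_of_int (fx_code q (xs j' $ i))" by simp
    then show ?thesis using fx_code_repr[OF repr_x[OF j(1)]] fx_code_repr[OF repr_x[OF j(2)]] by simp
  qed
  then have "xs j = xs j'" by (simp add: vec_eq_iff)
  then show "j = j'" using inj j by (auto dest: inj_onD)
qed

lemma inj_enc: "inj_on (\<lambda>j. enc (xs j)) {..<N}"
  by (rule inj_onI) (auto intro: enc_eq)

lemma desired_enc: "j < N \<Longrightarrow> desired (enc (xs j)) \<longleftrightarrow> f (xs j) < f xk"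
proof -
  assume j: "j < N"
  have "real_of_int (fx_code q (- f xk) + fx_code q (f (xs j))) = (f (xs j) - f xk) * 2 ^ q"
    using fx_code_repr[OF repr_mfk] fx_code_repr[OF repr_f[OF j]] by (simp add: algebra_simps)
  moreover have "(i::int) < 0 \<longleftrightarrow> real_of_int i < 0" for i by simp
  ultimately have "fx_code q (- f xk) + fx_code q (f (xs j)) < 0 \<longleftrightarrow> (f (xs j) - f xk) * 2 ^ q < 0"
    by metis
  also have "\<dots> \<longleftrightarrow> f (xs j) < f xk" by (simp add: mult_less_0_iff)
  finally show ?thesis unfolding desired_def sign_bit_def enc_def enc_basis_def by simp
qed

lemma decode_enc: "j < N \<Longrightarrow> fx_decode_vec q (fst (enc (xs j))) = xs j"
  unfolding fx_decode_vec_def enc_def enc_basis_def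
  by (simp add: vec_eq_iff fx_code_repr[OF repr_x])

lemma finite_S: "finite Sset" unfolding Sset_def by simp

lemma card_S: "card Sset = N"
  unfolding Sset_def using card_image[OF inj_enc] by simp

lemma Gset_eq: "Gset = (\<lambda>j. enc (xs j)) ` {j \<in> {..<N}. f (xs j) < f xk}"
  unfolding Gset_def Sset_def using desired_enc by auto

lemma card_G: "card Gset = tt"
proof -
  have "inj_on (\<lambda>j. enc (xs j)) {j \<in> {..<N}. f (xs j) < f xk}"
    using inj_enc by (rule inj_on_subset) auto
  then show ?thesis unfolding Gset_eq tt_def improved_count_def by (simp add: card_image)
qed

lemma G_sub: "Gset \<subseteq> Sset" unfolding Gset_def by auto

lemma tt_le: "tt \<le> N"
  using card_mono[OF finite_S G_sub] card_G card_S by simp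

lemma card_B: "card Bset = N - tt"
  unfolding Bset_def using card_Diff_subset[OF finite_subset[OF G_sub finite_S] G_sub] card_G card_S by simp

lemma S_union: "Sset = Gset \<union> Bset" and GB_disj: "Gset \<inter> Bset = {}"
  unfolding Bset_def using G_sub by auto

lemma finite_G: "finite Gset" and finite_B: "finite Bset"
  using finite_S S_union by auto

lemma vecf_out: "x \<notin> Sset \<Longrightarrow> vecf a b x = 0"
  unfolding vecf_def using S_union by auto

lemma vecf_G: "x \<in> Gset \<Longrightarrow> vecf a b x = complex_of_real a"
  unfolding vecf_def by simp

lemma vecf_B: "x \<in> Bset \<Longrightarrow> vecf a b x = complex_of_real b"
  unfolding vecf_def using GB_disj by auto

lemma psi_vecf: "psi = vecf (1 / sqrt (real N)) (1 / sqrt (real N))"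
proof
  fix x
  let ?c = "complex_of_real (1 / sqrt (real N))"
  have "psi x = (\<Sum>j<N. ?c * ket (enc (xs j)) x)"
    unfolding psi_def qss_state_def enc_def by simp
  also have "\<dots> = (\<Sum>e\<in>Sset. ?c * ket e x)"
    unfolding Sset_def by (subst sum.reindex[OF inj_enc]) simp
  also have "\<dots> = (\<Sum>e\<in>Sset. if x = e then ?c else 0)"
    unfolding ket_def by (rule sum.cong) auto
  also have "\<dots> = (if x \<in> Sset then ?c else 0)"
    using sum.delta'[OF finite_S, of x "\<lambda>_. ?c"] by simp
  also have "\<dots> = vecf (1 / sqrt (real N)) (1 / sqrt (real N)) x"
    unfolding vecf_def using S_union by auto
  finally show "psi x = vecf (1 / sqrt (real N)) (1 / sqrt (real N)) x" .
qed

lemma S_sub_B: "Sset \<subseteq> BB"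
proof
  fix x assume x: "x \<in> Sset"
  have k0: "supported_in BB ket0" unfolding supported_in_def ket0_def ket_def using zero_qbasis by auto
  have sp: "supported_in BB psi" using unitary_inv(3)[OF U k0] Aket0 by simp
  have "psi x \<noteq> 0" using x Npos unfolding psi_vecf vecf_def S_union by auto
  then show "x \<in> BB" using sp unfolding supported_in_def by blast
qed

lemma vecf_supp: "supported_in BB (vecf a b)"
  unfolding supported_in_def using vecf_out S_sub_B by blast

lemma Schi_vecf: "Schi (vecf a b) = vecf (- a) b"
  unfolding Schi_def vecf_def Gset_def Bset_def by (rule ext) auto

lemma sum_S_split: "(\<Sum>x\<in>BB. g x) = (\<Sum>x\<in>Gset. g x) + (\<Sum>x\<in>Bset. g x)"
  if "\<And>x. x \<notin> Sset \<Longrightarrow> g x = 0" for g :: "'n qbasis \<Rightarrow> 'a::comm_monoid_add"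
proof -
  have "(\<Sum>x\<in>BB. g x) = (\<Sum>x\<in>Sset. g x)"
    using that S_sub_B finite_qbasis by (intro sum.mono_neutral_right) auto
  also have "\<dots> = (\<Sum>x\<in>Gset. g x) + (\<Sum>x\<in>Bset. g x)"
    unfolding S_union using finite_G finite_B GB_disj by (rule sum.union_disjoint)
  finally show ?thesis .
qed

lemma ipr_vecf:
  "ipr BB (vecf a b) (vecf c c) = complex_of_real (c * (a * real tt + b * (real N - real tt)))"
proof -
  have "ipr BB (vecf a b) (vecf c c) = (\<Sum>x\<in>Gset. vecf a b x * cnj (vecf c c x)) + (\<Sum>x\<in>Bset. vecf a b x * cnj (vecf c c x))"
    unfolding ipr_def by (rule sum_S_split) (simp add: vecf_out)
  also have "(\<Sum>x\<in>Gset. vecf a b x * cnj (vecf c c x)) = (\<Sum>x\<in>Gset. complex_of_real (a * c))"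
    unfolding vecf_def by (rule sum.cong) auto
  also have "(\<Sum>x\<in>Bset. vecf a b x * cnj (vecf c c x)) = (\<Sum>x\<in>Bset. complex_of_real (b * c))"
    unfolding vecf_def using GB_disj by (intro sum.cong) auto
  finally show ?thesis using card_G card_B tt_le by (simp add: of_nat_diff algebra_simps)
qed

definition rr :: "real \<Rightarrow> real \<Rightarrow> real" where
  "rr a b = 2 * (b * (real N - real tt) - a * real tt) / real N"

lemma c0sq: "(1 / sqrt (real N)) * (1 / sqrt (real N)) = 1 / real N"
  using Npos real_sqrt_mult_self[of "real N"] by simp

lemma Q_vecf: "Qop A Ainv (vecf a b) = vecf (a + rr a b) (- b + rr a b)"
proof
  fix x
  let ?c = "1 / sqrt (real N)"
  have r: "A (S0 (Ainv (Schi (vecf a b)))) = (\<lambda>y. vecf (-a) b y - 2 * ipr BB (vecf (-a) b) psi * psi y)"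
    unfolding Schi_vecf using reflect[OF U vecf_supp] Aket0 by simp
  have ip: "ipr BB (vecf (-a) b) psi = complex_of_real (?c * (- a * real tt + b * (real N - real tt)))"
    unfolding psi_vecf by (rule ipr_vecf)
  have "Qop A Ainv (vecf a b) x = - (vecf (-a) b x - 2 * complex_of_real (?c * (- a * real tt + b * (real N - real tt))) * vecf ?c ?c x)"
    unfolding Qop_def r ip psi_vecf[symmetric] by (simp add: psi_vecf)
  also have "\<dots> = vecf (a + rr a b) (- b + rr a b) x"
  proof -
    define E where "E = ?c * (- a * real tt + b * (real N - real tt))"
    have e: "2 * E * ?c = rr a b"
      unfolding rr_def E_def using c0sq by (simp add: field_simps)
    have ec: "2 * complex_of_real E * complex_of_real ?c = complex_of_real (rr a b)"
      using e by (metis of_real_mult of_real_numeral)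
    consider "x \<in> Gset" | "x \<in> Bset" | "x \<notin> Sset" using S_union by blast
    then show ?thesis
    proof cases
      case 1
      show ?thesis unfolding E_def[symmetric] vecf_G[OF 1] ec by simp
    next
      case 2
      show ?thesis unfolding E_def[symmetric] vecf_B[OF 2] ec by simp
    next
      case 3
      show ?thesis unfolding E_def[symmetric] vecf_out[OF 3] by simp
    qed
  qed
  finally show "Qop A Ainv (vecf a b) x = vecf (a + rr a b) (- b + rr a b) x" .
qed

end

context qss begin

definition c0 :: real where "c0 = 1 / sqrt (real N)"

definition stepf :: "real \<times> real \<Rightarrow> real \<times> real" where
  "stepf p = (fst p + rr (fst p) (snd p), - snd p + rr (fst p) (snd p))"

definition amp :: "nat \<Rightarrow> real \<times> real" where
  "amp j = (stepf ^^ j) (c0, c0)"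

definition Pj :: "nat \<Rightarrow> real" where
  "Pj j = (fst (amp j))\<^sup>2 * real tt"

lemma V_amp: "(Qop A Ainv ^^ j) psi = vecf (fst (amp j)) (snd (amp j))"
proof (induction j)
  case 0 then show ?case unfolding amp_def c0_def by (simp add: psi_vecf)
next
  case (Suc j)
  have "amp (Suc j) = stepf (amp j)" unfolding amp_def by simp
  then show ?case using Suc by (simp add: Q_vecf stepf_def)
qed

lemma norm_step:
  "(a + rr a b)\<^sup>2 * real tt + (- b + rr a b)\<^sup>2 * (real N - real tt) = a\<^sup>2 * real tt + b\<^sup>2 * (real N - real tt)"
proof -
  define r where "r = rr a b"
  have rN: "r * real N = 2 * (b * (real N - real tt) - a * real tt)"
    unfolding r_def rr_def using Npos by simp
  have "(a + r)\<^sup>2 * real tt + (- b + r)\<^sup>2 * (real N - real tt) - (a\<^sup>2 * real tt + b\<^sup>2 * (real N - real tt))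
      = r * (r * real N - 2 * (b * (real N - real tt) - a * real tt))"
    by (simp add: algebra_simps power2_eq_square)
  also have "\<dots> = 0" using rN by simp
  finally show ?thesis unfolding r_def by simp
qed

lemma norm_amp: "(fst (amp j))\<^sup>2 * real tt + (snd (amp j))\<^sup>2 * (real N - real tt) = 1"
proof (induction j)
  case 0
  have "c0\<^sup>2 = 1 / real N" unfolding c0_def using Npos by (simp add: power_divide)
  then show ?case unfolding amp_def using Npos by (simp add: field_simps)
next
  case (Suc j)
  have "amp (Suc j) = stepf (amp j)" unfolding amp_def by simp
  then show ?case using Suc norm_step[of "fst (amp j)" "snd (amp j)"] by (simp add: stepf_def)
qed

lemma Pj_bounds: "0 \<le> Pj j \<and> Pj j \<le> 1"
proof -
  have "0 \<le> (snd (amp j))\<^sup>2 * (real N - real tt)" using tt_le by simp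
  then show ?thesis using norm_amp[of j] unfolding Pj_def by simp
qed

lemma Pj0: "Pj 0 = real tt / real N"
proof -
  have "c0\<^sup>2 = 1 / real N" unfolding c0_def using Npos by (simp add: power_divide)
  then show ?thesis unfolding Pj_def amp_def by simp
qed

lemma sum_vecf_sq: "(\<Sum>x\<in>Sset. (cmod (vecf a b x))\<^sup>2) = a\<^sup>2 * real tt + b\<^sup>2 * (real N - real tt)"
proof -
  have "(\<Sum>x\<in>Sset. (cmod (vecf a b x))\<^sup>2) = (\<Sum>x\<in>Gset. (cmod (vecf a b x))\<^sup>2) + (\<Sum>x\<in>Bset. (cmod (vecf a b x))\<^sup>2)"
    unfolding S_union using finite_G finite_B GB_disj by (rule sum.union_disjoint)
  also have "(\<Sum>x\<in>Gset. (cmod (vecf a b x))\<^sup>2) = (\<Sum>x\<in>Gset. a\<^sup>2)" by (rule sum.cong) (simp_all add: vecf_G)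
  also have "(\<Sum>x\<in>Bset. (cmod (vecf a b x))\<^sup>2) = (\<Sum>x\<in>Bset. b\<^sup>2)" by (rule sum.cong) (simp_all add: vecf_B)
  finally show ?thesis using card_G card_B tt_le by (simp add: of_nat_diff algebra_simps)
qed

context
  fixes a b :: real
  assumes nab: "a\<^sup>2 * real tt + b\<^sup>2 * (real N - real tt) = 1"
begin

lemma mb_valid: "(\<integral>\<^sup>+x. ennreal ((cmod (vecf a b x))\<^sup>2) \<partial>count_space UNIV) = 1"
proof -
  have "(\<integral>\<^sup>+x. ennreal ((cmod (vecf a b x))\<^sup>2) \<partial>count_space UNIV) = (\<Sum>x\<in>Sset. ennreal ((cmod (vecf a b x))\<^sup>2))"
    by (rule nn_integral_count_space') (auto simp: finite_S vecf_out)
  also have "\<dots> = ennreal (\<Sum>x\<in>Sset. (cmod (vecf a b x))\<^sup>2)" by simp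
  also have "\<dots> = 1" using nab sum_vecf_sq by simp
  finally show ?thesis .
qed

lemma pmf_mb: "pmf (measure_basis (vecf a b)) x = (cmod (vecf a b x))\<^sup>2"
  unfolding measure_basis_def by (rule pmf_embed_pmf) (simp_all add: mb_valid)

lemma set_mb: "set_pmf (measure_basis (vecf a b)) \<subseteq> Sset"
proof -
  have "set_pmf (measure_basis (vecf a b)) = {x. (cmod (vecf a b x))\<^sup>2 \<noteq> 0}"
    unfolding measure_basis_def by (rule set_embed_pmf) (simp_all add: mb_valid)
  then show ?thesis using vecf_out by (metis (mono_tags, lifting) mem_Collect_eq subsetI zero_eq_power2 norm_zero)
qed

lemma map_mb: "map_pmf desired (measure_basis (vecf a b)) = bernoulli_pmf (a\<^sup>2 * real tt)"
proof -
  let ?M = "measure_basis (vecf a b)"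
  have meas: "measure ?M X = (\<Sum>x\<in>X \<inter> Sset. (cmod (vecf a b x))\<^sup>2)" for X
  proof -
    have "measure ?M X = measure ?M (X \<inter> set_pmf ?M)" by (simp add: measure_Int_set_pmf)
    also have "X \<inter> set_pmf ?M = (X \<inter> Sset) \<inter> set_pmf ?M" using set_mb by auto
    also have "measure ?M \<dots> = measure ?M (X \<inter> Sset)" by (simp add: measure_Int_set_pmf)
    also have "\<dots> = (\<Sum>x\<in>X \<inter> Sset. pmf ?M x)" using finite_S by (simp add: measure_measure_pmf_finite)
    finally show ?thesis by (simp add: pmf_mb)
  qed
  have T: "desired -` {True} \<inter> Sset = Gset" unfolding Gset_def by auto
  have F: "desired -` {False} \<inter> Sset = Bset" unfolding Bset_def Gset_def by auto
  have sG: "(\<Sum>x\<in>Gset. (cmod (vecf a b x))\<^sup>2) = a\<^sup>2 * real tt"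
  proof -
    have "(\<Sum>x\<in>Gset. (cmod (vecf a b x))\<^sup>2) = (\<Sum>x\<in>Gset. a\<^sup>2)" by (rule sum.cong) (simp_all add: vecf_G)
    then show ?thesis using card_G by simp
  qed
  have sB: "(\<Sum>x\<in>Bset. (cmod (vecf a b x))\<^sup>2) = b\<^sup>2 * (real N - real tt)"
  proof -
    have "(\<Sum>x\<in>Bset. (cmod (vecf a b x))\<^sup>2) = (\<Sum>x\<in>Bset. b\<^sup>2)" by (rule sum.cong) (simp_all add: vecf_B)
    then show ?thesis using card_B tt_le by (simp add: of_nat_diff)
  qed
  have p01: "0 \<le> a\<^sup>2 * real tt" "a\<^sup>2 * real tt \<le> 1"
    using nab tt_le by (simp, smt (verit, best) of_nat_mono mult_nonneg_nonneg zero_le_power2)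
  show ?thesis
  proof (rule pmf_eqI)
    fix i :: bool
    show "pmf (map_pmf desired ?M) i = pmf (bernoulli_pmf (a\<^sup>2 * real tt)) i"
    proof (cases i)
      case True
      then show ?thesis unfolding pmf_map meas using T sG p01 by simp
    next
      case False
      then show ?thesis unfolding pmf_map meas using F sB p01 nab by simp
    qed
  qed
qed

end

lemma mb_amp: "map_pmf desired (measure_basis ((Qop A Ainv ^^ j) psi)) = bernoulli_pmf (Pj j)"
  unfolding V_amp Pj_def using map_mb[OF norm_amp] .

lemma set_mb_amp: "set_pmf (measure_basis ((Qop A Ainv ^^ j) psi)) \<subseteq> Sset"
  unfolding V_amp using set_mb[OF norm_amp] .

end

fun absR :: "(nat \<Rightarrow> real) \<Rightarrow> nat list \<Rightarrow> (bool \<times> nat) pmf" where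
  "absR P [] = return_pmf (False, 0)"
| "absR P (M # Ms) = bind_pmf (pmf_of_set {1..M}) (\<lambda>j. bind_pmf (bernoulli_pmf (P j))
     (\<lambda>s. if s then return_pmf (True, 1 + 2 * j) else map_pmf (\<lambda>x. (fst x, 1 + 2 * j + snd x)) (absR P Ms)))"

definition absTop :: "(nat \<Rightarrow> real) \<Rightarrow> nat list \<Rightarrow> (bool \<times> nat) pmf" where
  "absTop P Ms = bind_pmf (bernoulli_pmf (P 0))
     (\<lambda>s. if s then return_pmf (True, 1) else map_pmf (\<lambda>x. (fst x, 1 + snd x)) (absR P Ms))"

context qss begin

definition pii :: "'n qbasis option \<times> nat \<Rightarrow> bool \<times> nat" where
  "pii x = (fst x \<noteq> None, snd x)"

lemma rounds_abs: "map_pmf pii (qsearch_rounds A Ainv psi Ms) = absR Pj Ms"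
proof (induction Ms)
  case Nil
  then show ?case by (simp add: pii_def)
next
  case (Cons M Ms)
  define g where "g = (\<lambda>k s. if s then return_pmf (True, k) else map_pmf (\<lambda>x. (fst x, k + snd x)) (absR Pj Ms))"
  have step1: "map_pmf pii (qsearch_rounds A Ainv psi (M # Ms)) =
      bind_pmf (qsearch_round A Ainv psi M) (\<lambda>x. g (snd x) (desired (fst x)))"
  proof -
    have "map_pmf pii (qsearch_rounds A Ainv psi (M # Ms)) =
      bind_pmf (qsearch_round A Ainv psi M) (\<lambda>x. map_pmf pii ((\<lambda>(b, k). if desired b then return_pmf (Some b, k)
          else bind_pmf (qsearch_rounds A Ainv psi Ms) (\<lambda>(r, k'). return_pmf (r, k + k'))) x))"
      by (simp add: map_bind_pmf)
    also have "\<dots> = bind_pmf (qsearch_round A Ainv psi M) (\<lambda>x. g (snd x) (desired (fst x)))"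
    proof (intro bind_pmf_cong refl)
      fix x :: "'n qbasis \<times> nat"
      obtain b k where x: "x = (b, k)" by (cases x)
      have "map_pmf pii (bind_pmf (qsearch_rounds A Ainv psi Ms) (\<lambda>(r, k'). return_pmf (r, k + k')))
          = map_pmf (\<lambda>x. (fst x, k + snd x)) (map_pmf pii (qsearch_rounds A Ainv psi Ms))"
        by (simp add: map_pmf_def bind_assoc_pmf bind_return_pmf split_def pii_def)
      then show "map_pmf pii ((\<lambda>(b, k). if desired b then return_pmf (Some b, k)
          else bind_pmf (qsearch_rounds A Ainv psi Ms) (\<lambda>(r, k'). return_pmf (r, k + k'))) x) = g (snd x) (desired (fst x))"
        unfolding x g_def using Cons.IH by (simp add: pii_def)
    qed
    finally show ?thesis .
  qed
  also have "\<dots> = bind_pmf (pmf_of_set {1..M}) (\<lambda>j. bind_pmf (measure_basis ((Qop A Ainv ^^ j) psi)) (\<lambda>b. g (1 + 2 * j) (desired b)))"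
    unfolding qsearch_round_def by (simp add: bind_assoc_pmf bind_return_pmf)
  also have "\<dots> = bind_pmf (pmf_of_set {1..M}) (\<lambda>j. bind_pmf (map_pmf desired (measure_basis ((Qop A Ainv ^^ j) psi))) (g (1 + 2 * j)))"
    by (simp add: bind_map_pmf)
  also have "\<dots> = absR Pj (M # Ms)"
    unfolding mb_amp g_def by simp
  finally show ?case .
qed

lemma top_abs: "map_pmf pii (modified_qsearch c \<tau> N A Ainv psi) = absTop Pj (round_params c \<tau> N)"
proof -
  define g where "g = (\<lambda>s. if s then return_pmf (True, 1) else map_pmf (\<lambda>x. (fst x, 1 + snd x)) (absR Pj (round_params c \<tau> N)))"
  have "map_pmf pii (modified_qsearch c \<tau> N A Ainv psi) = bind_pmf (measure_basis psi) (\<lambda>b. g (desired b))"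
    unfolding modified_qsearch_def map_bind_pmf
  proof (intro bind_pmf_cong refl)
    fix b :: "'n qbasis"
    have "map_pmf pii (bind_pmf (qsearch_rounds A Ainv psi (round_params c \<tau> N)) (\<lambda>(r, k). return_pmf (r, 1 + k)))
        = map_pmf (\<lambda>x. (fst x, 1 + snd x)) (map_pmf pii (qsearch_rounds A Ainv psi (round_params c \<tau> N)))"
      by (simp add: map_pmf_def bind_assoc_pmf bind_return_pmf split_def pii_def)
    then show "map_pmf pii (if desired b then return_pmf (Some b, 1)
        else bind_pmf (qsearch_rounds A Ainv psi (round_params c \<tau> N)) (\<lambda>(r, k). return_pmf (r, 1 + k))) = g (desired b)"
      unfolding g_def using rounds_abs by (simp add: pii_def)
  qed
  also have "\<dots> = bind_pmf (map_pmf desired (measure_basis ((Qop A Ainv ^^ 0) psi))) g"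
    by (simp add: bind_map_pmf)
  also have "\<dots> = absTop Pj (round_params c \<tau> N)"
    unfolding mb_amp g_def absTop_def by simp
  finally show ?thesis .
qed

end

lemma finite_absR:
  assumes "\<forall>M\<in>set Ms. 1 \<le> M"
  shows "finite (set_pmf (absR P Ms))"
  using assms
proof (induction Ms)
  case Nil then show ?case by simp
next
  case (Cons M Ms)
  then have M: "{1..M} \<noteq> {}" by simp
  have fin: "finite (set_pmf (bind_pmf (bernoulli_pmf (P j)) (\<lambda>s. if s then return_pmf (True, 1 + 2 * j)
     else map_pmf (\<lambda>x. (fst x, 1 + 2 * j + snd x)) (absR P Ms))))" for j
  proof -
    have "finite (set_pmf (bernoulli_pmf (P j)))" by (rule finite_subset[of _ UNIV]) auto
    moreover have "finite (set_pmf (if s then return_pmf (True, 1 + 2 * j)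
     else map_pmf (\<lambda>x. (fst x, 1 + 2 * j + snd x)) (absR P Ms)))" for s
      using Cons by auto
    ultimately show ?thesis by (simp only: set_bind_pmf) blast
  qed
  show ?case unfolding absR.simps set_bind_pmf set_pmf_of_set[OF M finite_atLeastAtMost]
    using fin by (simp only: set_bind_pmf) blast
qed

lemma E_absR_Cons:
  fixes h :: "bool \<times> nat \<Rightarrow> real"
  assumes M: "1 \<le> M" and Ms: "\<forall>M\<in>set Ms. 1 \<le> M" and P: "\<And>j. 0 \<le> P j \<and> P j \<le> 1"
  shows "measure_pmf.expectation (absR P (M # Ms)) h =
    (\<Sum>j\<in>{1..M}. P j * h (True, 1 + 2 * j) +
       (1 - P j) * measure_pmf.expectation (absR P Ms) (\<lambda>x. h (fst x, 1 + 2 * j + snd x))) / real M"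
proof -
  define G where "G = (\<lambda>j s. if s then return_pmf (True, 1 + 2 * j)
     else map_pmf (\<lambda>x. (fst x, 1 + 2 * j + snd x)) (absR P Ms))"
  have fG: "finite (set_pmf (G j s))" for j s
    unfolding G_def using finite_absR[OF Ms] by auto
  have fB: "finite (set_pmf (bind_pmf (bernoulli_pmf (P j)) (G j)))" for j
  proof -
    have "finite (set_pmf (bernoulli_pmf (P j)))" by (rule finite_subset[of _ UNIV]) auto
    then show ?thesis using fG by (simp only: set_bind_pmf) blast
  qed
  have inner: "measure_pmf.expectation (bind_pmf (bernoulli_pmf (P j)) (G j)) h =
      P j * h (True, 1 + 2 * j) + (1 - P j) * measure_pmf.expectation (absR P Ms) (\<lambda>x. h (fst x, 1 + 2 * j + snd x))" for j
  proof -
    have "measure_pmf.expectation (bind_pmf (bernoulli_pmf (P j)) (G j)) h =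
        (\<Sum>s\<in>UNIV. pmf (bernoulli_pmf (P j)) s *\<^sub>R measure_pmf.expectation (G j s) h)"
      by (rule pmf_expectation_bind) (auto simp: fG)
    also have "\<dots> = P j * h (True, 1 + 2 * j) + (1 - P j) * measure_pmf.expectation (absR P Ms) (\<lambda>x. h (fst x, 1 + 2 * j + snd x))"
      using P[of j] by (simp add: UNIV_bool G_def)
    finally show ?thesis .
  qed
  have "measure_pmf.expectation (absR P (M # Ms)) h =
     (\<Sum>j\<in>{1..M}. measure_pmf.expectation (bind_pmf (bernoulli_pmf (P j)) (G j)) h /\<^sub>R real (card {1..M}))"
  proof -
    have "absR P (M # Ms) = bind_pmf (pmf_of_set {1..M}) (\<lambda>j. bind_pmf (bernoulli_pmf (P j)) (G j))"
      by (simp add: G_def)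
    then show ?thesis
      by (simp only:) (rule pmf_expectation_bind_pmf_of_set, use M fB in auto)
  qed
  also have "\<dots> = (\<Sum>j\<in>{1..M}. measure_pmf.expectation (bind_pmf (bernoulli_pmf (P j)) (G j)) h) / real M"
    by (simp add: sum_distrib_left[symmetric] divide_inverse_commute)
  finally show ?thesis unfolding inner .
qed

lemma sum_odd: "(\<Sum>j\<in>{1..M}. 1 + 2 * real j) = real M * (real M + 2)"
proof (induction M)
  case 0 then show ?case by simp
next
  case (Suc M)
  have "(\<Sum>j\<in>{1..Suc M}. 1 + 2 * real j) = (\<Sum>j\<in>{1..M}. 1 + 2 * real j) + (1 + 2 * real (Suc M))"
    using sum.cl_ivl_Suc[of "\<lambda>j. 1 + 2 * real j" 1 M] by simp
  then show ?case using Suc by (simp add: algebra_simps)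
qed

lemma E_cost:
  assumes Ms: "\<forall>M\<in>set Ms. 1 \<le> M" and P: "\<And>j. 0 \<le> P j \<and> P j \<le> 1"
  shows "measure_pmf.expectation (absR P Ms) (\<lambda>x. real (snd x)) = ecost P Ms"
  using Ms
proof (induction Ms)
  case Nil then show ?case by simp
next
  case (Cons M Ms)
  then have M: "1 \<le> M" and Ms': "\<forall>M\<in>set Ms. 1 \<le> M" by auto
  have int: "integrable (measure_pmf (absR P Ms)) (\<lambda>x. real (snd x))"
    by (rule integrable_measure_pmf_finite[OF finite_absR[OF Ms']])
  have sh: "measure_pmf.expectation (absR P Ms) (\<lambda>x. real (snd (fst x, 1 + 2 * j + snd x))) = (1 + 2 * real j) + ecost P Ms" for j
  proof -
    have "measure_pmf.expectation (absR P Ms) (\<lambda>x. real (snd (fst x, 1 + 2 * j + snd x)))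
        = measure_pmf.expectation (absR P Ms) (\<lambda>x. (1 + 2 * real j) + real (snd x))" by (simp add: add.assoc)
    also have "\<dots> = (1 + 2 * real j) + measure_pmf.expectation (absR P Ms) (\<lambda>x. real (snd x))"
      using int by (simp add: Bochner_Integration.integral_add)
    finally show ?thesis using Cons.IH[OF Ms'] by simp
  qed
  have "measure_pmf.expectation (absR P (M # Ms)) (\<lambda>x. real (snd x)) =
     (\<Sum>j\<in>{1..M}. P j * (1 + 2 * real j) + (1 - P j) * ((1 + 2 * real j) + ecost P Ms)) / real M"
    unfolding E_absR_Cons[OF M Ms' P] sh by simp
  also have "\<dots> = (\<Sum>j\<in>{1..M}. (1 + 2 * real j) + ecost P Ms - P j * ecost P Ms) / real M"
    by (simp add: algebra_simps)
  also have "\<dots> = (real M * (real M + 2) + real M * ecost P Ms - (\<Sum>j\<in>{1..M}. P j) * ecost P Ms) / real M"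
  proof -
    have "(\<Sum>j\<in>{1..M}. (1 + 2 * real j) + ecost P Ms - P j * ecost P Ms) = (\<Sum>j\<in>{1..M}. 1 + 2 * real j) + (\<Sum>j\<in>{1..M}. ecost P Ms) - (\<Sum>j\<in>{1..M}. P j) * ecost P Ms"
      by (simp only: sum_subtractf sum.distrib sum_distrib_right)
    then show ?thesis unfolding sum_odd by simp
  qed
  also have "\<dots> = ecost P (M # Ms)"
    using M by (simp add: pavg_def field_simps)
  finally show ?case .
qed

lemma E_fail:
  assumes Ms: "\<forall>M\<in>set Ms. 1 \<le> M" and P: "\<And>j. 0 \<le> P j \<and> P j \<le> 1"
  shows "measure_pmf.expectation (absR P Ms) (\<lambda>x. if fst x then 0 else 1) = fprob P Ms"
  using Ms
proof (induction Ms)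
  case Nil then show ?case by simp
next
  case (Cons M Ms)
  then have M: "1 \<le> M" and Ms': "\<forall>M\<in>set Ms. 1 \<le> M" by auto
  have "measure_pmf.expectation (absR P (M # Ms)) (\<lambda>x. if fst x then 0 else 1 :: real) =
     (\<Sum>j\<in>{1..M}. (1 - P j) * fprob P Ms) / real M"
    unfolding E_absR_Cons[OF M Ms' P] using Cons.IH[OF Ms'] by simp
  also have "\<dots> = (real M - (\<Sum>j\<in>{1..M}. P j)) * fprob P Ms / real M"
    by (simp add: sum_subtractf sum_distrib_right[symmetric])
  also have "\<dots> = fprob P (M # Ms)"
    using M by (simp add: pavg_def field_simps)
  finally show ?case .
qed

lemma E_top:
  fixes h :: "bool \<times> nat \<Rightarrow> real"
  assumes Ms: "\<forall>M\<in>set Ms. 1 \<le> M" and P: "\<And>j. 0 \<le> P j \<and> P j \<le> 1"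
  shows "measure_pmf.expectation (absTop P Ms) h =
     P 0 * h (True, 1) + (1 - P 0) * measure_pmf.expectation (absR P Ms) (\<lambda>x. h (fst x, 1 + snd x))"
proof -
  define G where "G = (\<lambda>s. if s then return_pmf (True, 1)
     else map_pmf (\<lambda>x. (fst x, 1 + snd x)) (absR P Ms))"
  have fG: "finite (set_pmf (G s))" for s
    unfolding G_def using finite_absR[OF Ms] by auto
  have "measure_pmf.expectation (absTop P Ms) h =
        (\<Sum>s\<in>UNIV. pmf (bernoulli_pmf (P 0)) s *\<^sub>R measure_pmf.expectation (G s) h)"
    unfolding absTop_def G_def[symmetric] by (rule pmf_expectation_bind) (auto simp: fG)
  also have "\<dots> = P 0 * h (True, 1) + (1 - P 0) * measure_pmf.expectation (absR P Ms) (\<lambda>x. h (fst x, 1 + snd x))"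
    using P[of 0] by (simp add: UNIV_bool G_def)
  finally show ?thesis .
qed

lemma E_top_cost:
  assumes Ms: "\<forall>M\<in>set Ms. 1 \<le> M" and P: "\<And>j. 0 \<le> P j \<and> P j \<le> 1"
  shows "measure_pmf.expectation (absTop P Ms) (\<lambda>x. real (snd x)) = 1 + (1 - P 0) * ecost P Ms"
proof -
  have int: "integrable (measure_pmf (absR P Ms)) (\<lambda>x. real (snd x))"
    by (rule integrable_measure_pmf_finite[OF finite_absR[OF Ms]])
  have "measure_pmf.expectation (absR P Ms) (\<lambda>x. real (snd (fst x, 1 + snd x))) = 1 + ecost P Ms"
    using int E_cost[OF Ms P] by (simp add: Bochner_Integration.integral_add)
  then show ?thesis unfolding E_top[OF Ms P] by (simp add: algebra_simps)
qed

lemma E_top_fail: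
  assumes Ms: "\<forall>M\<in>set Ms. 1 \<le> M" and P: "\<And>j. 0 \<le> P j \<and> P j \<le> 1"
  shows "measure_pmf.prob (absTop P Ms) {p. fst p = False} = (1 - P 0) * fprob P Ms"
proof -
  have "measure_pmf.prob (absTop P Ms) {p. fst p = False} =
      measure_pmf.expectation (absTop P Ms) (indicator {p. fst p = False})" by simp
  also have "\<dots> = measure_pmf.expectation (absTop P Ms) (\<lambda>x. if fst x then 0 else 1)"
    by (rule Bochner_Integration.integral_cong) (auto simp: indicator_def)
  also have "\<dots> = (1 - P 0) * fprob P Ms"
    unfolding E_top[OF Ms P] using E_fail[OF Ms P] by simp
  finally show ?thesis .
qed

lemma rot:
  fixes \<sigma> \<kappa> \<nu> \<theta> \<phi> :: real
  assumes pos: "\<sigma> > 0" "\<kappa> > 0" "\<nu> > 0" and nu: "\<nu>\<^sup>2 = \<sigma>\<^sup>2 + \<kappa>\<^sup>2"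
    and st: "sin \<theta> = \<sigma> / \<nu>" and ct: "cos \<theta> = \<kappa> / \<nu>"
  shows "sin (\<phi> + 2 * \<theta>) / \<sigma> = sin \<phi> / \<sigma> + 2 * ((cos \<phi> / \<kappa>) * \<kappa>\<^sup>2 - (sin \<phi> / \<sigma>) * \<sigma>\<^sup>2) / \<nu>\<^sup>2"
    and "cos (\<phi> + 2 * \<theta>) / \<kappa> = - (cos \<phi> / \<kappa>) + 2 * ((cos \<phi> / \<kappa>) * \<kappa>\<^sup>2 - (sin \<phi> / \<sigma>) * \<sigma>\<^sup>2) / \<nu>\<^sup>2"
proof -
  define D where "D = \<nu>\<^sup>2"
  have D0: "D > 0" unfolding D_def using pos by simp
  have DD: "D = \<sigma>\<^sup>2 + \<kappa>\<^sup>2" unfolding D_def using nu by simp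
  have s2: "sin (2 * \<theta>) = 2 * \<sigma> * \<kappa> / D" unfolding D_def using st ct by (simp add: sin_double power2_eq_square)
  have c2: "cos (2 * \<theta>) = (\<kappa>\<^sup>2 - \<sigma>\<^sup>2) / D" unfolding D_def using st ct by (simp add: cos_double power_divide diff_divide_distrib)
  have "sin (\<phi> + 2 * \<theta>) / \<sigma> = (sin \<phi> * (\<kappa>\<^sup>2 - \<sigma>\<^sup>2) + 2 * \<sigma> * \<kappa> * cos \<phi>) / (\<sigma> * D)"
    unfolding sin_add s2 c2 using pos D0 by (simp add: field_simps)
  also have "sin \<phi> * (\<kappa>\<^sup>2 - \<sigma>\<^sup>2) = sin \<phi> * D - 2 * \<sigma>\<^sup>2 * sin \<phi>" unfolding DD by (simp add: algebra_simps)
  also have "(sin \<phi> * D - 2 * \<sigma>\<^sup>2 * sin \<phi> + 2 * \<sigma> * \<kappa> * cos \<phi>) / (\<sigma> * D) =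
     sin \<phi> / \<sigma> + 2 * ((cos \<phi> / \<kappa>) * \<kappa>\<^sup>2 - (sin \<phi> / \<sigma>) * \<sigma>\<^sup>2) / D"
    using pos D0 by (simp add: field_simps power2_eq_square)
  finally show "sin (\<phi> + 2 * \<theta>) / \<sigma> = sin \<phi> / \<sigma> + 2 * ((cos \<phi> / \<kappa>) * \<kappa>\<^sup>2 - (sin \<phi> / \<sigma>) * \<sigma>\<^sup>2) / \<nu>\<^sup>2"
    unfolding D_def .
  have "cos (\<phi> + 2 * \<theta>) / \<kappa> = (cos \<phi> * (\<kappa>\<^sup>2 - \<sigma>\<^sup>2) - 2 * \<sigma> * \<kappa> * sin \<phi>) / (\<kappa> * D)"
    unfolding cos_add s2 c2 using pos D0 by (simp add: field_simps)
  also have "cos \<phi> * (\<kappa>\<^sup>2 - \<sigma>\<^sup>2) = - cos \<phi> * D + 2 * \<kappa>\<^sup>2 * cos \<phi>" unfolding DD by (simp add: algebra_simps)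
  also have "(- cos \<phi> * D + 2 * \<kappa>\<^sup>2 * cos \<phi> - 2 * \<sigma> * \<kappa> * sin \<phi>) / (\<kappa> * D) =
     - (cos \<phi> / \<kappa>) + 2 * ((cos \<phi> / \<kappa>) * \<kappa>\<^sup>2 - (sin \<phi> / \<sigma>) * \<sigma>\<^sup>2) / D"
    using pos D0 by (simp add: field_simps power2_eq_square)
  finally show "cos (\<phi> + 2 * \<theta>) / \<kappa> = - (cos \<phi> / \<kappa>) + 2 * ((cos \<phi> / \<kappa>) * \<kappa>\<^sup>2 - (sin \<phi> / \<sigma>) * \<sigma>\<^sup>2) / \<nu>\<^sup>2"
    unfolding D_def .
qed

lemma u_count_le: "u_count c N l \<le> l"
proof -
  have "u_count c N l \<le> card {1..l}" unfolding u_count_def by (rule card_mono) auto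
  then show ?thesis by simp
qed

lemma u_count_exists:
  assumes c: "1 < c"
  shows "\<exists>l. \<beta> \<le> real (u_count c N l)"
proof -
  obtain i0 where i0: "sqrt (real N) < c ^ i0" using real_arch_pow[OF c] by blast
  define i1 where "i1 = Suc i0"
  have big: "sqrt (real N) < real_of_int \<lceil>c ^ i\<rceil>" if "i1 \<le> i" for i
  proof -
    have "c ^ i0 \<le> c ^ i" using c that unfolding i1_def by (intro power_increasing) auto
    then show ?thesis using i0 by linarith
  qed
  define l where "l = i1 + nat \<lceil>\<beta>\<rceil>"
  have "{i1..l} \<subseteq> {i \<in> {1..l}. sqrt (real N) < real_of_int \<lceil>c ^ i\<rceil>}"
    using big unfolding i1_def by auto
  then have "card {i1..l} \<le> u_count c N l" unfolding u_count_def by (intro card_mono) auto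
  moreover have "card {i1..l} = nat \<lceil>\<beta>\<rceil> + 1" unfolding l_def by simp
  ultimately have "real (nat \<lceil>\<beta>\<rceil> + 1) \<le> real (u_count c N l)" by linarith
  moreover have "\<beta> \<le> real (nat \<lceil>\<beta>\<rceil> + 1)" by linarith
  ultimately show ?thesis by (intro exI[of _ l]) linarith
qed


lemma num_rounds_spec:
  assumes c: "1 < c"
  shows "ln \<tau> / ln (3/4) \<le> real (u_count c N (num_rounds c \<tau> N))"
  unfolding num_rounds_def by (rule LeastI_ex) (rule u_count_exists[OF c])

lemma num_rounds_ge:
  assumes c: "1 < c"
  shows "ln \<tau> / ln (3/4) \<le> real (num_rounds c \<tau> N)"
  using num_rounds_spec[OF c, of \<tau> N] u_count_le[of c N "num_rounds c \<tau> N"] by linarith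

lemma num_rounds_big:
  assumes c: "1 < c" and b: "0 < ln \<tau> / ln (3/4)"
  shows "\<exists>i\<in>{1..num_rounds c \<tau> N}. sqrt (real N) < real_of_int \<lceil>c ^ i\<rceil>"
proof -
  have "0 < u_count c N (num_rounds c \<tau> N)" using num_rounds_spec[OF c, of \<tau> N] b by linarith
  then have "{i \<in> {1..num_rounds c \<tau> N}. sqrt (real N) < real_of_int \<lceil>c ^ i\<rceil>} \<noteq> {}"
    unfolding u_count_def by (metis card.empty less_irrefl)
  then show ?thesis by blast
qed

lemma round_params_Mseq: "round_params c \<tau> N = map (Mseq c) [1..<num_rounds c \<tau> N + 1]"
  unfolding round_params_def Mseq_def by simp

lemma round_params_ge1: "1 \<le> c \<Longrightarrow> \<forall>M\<in>set (round_params c \<tau> N). 1 \<le> M"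
  unfolding round_params_Mseq using Mseq_props(4) by auto

context qss begin

lemma Pj_sin:
  assumes t1: "1 \<le> tt" and tN: "tt < N"
  defines "\<theta> \<equiv> arcsin (sqrt (real tt / real N))"
  shows "Pj j = (sin ((2 * real j + 1) * \<theta>))\<^sup>2"
    and "sin \<theta> = sqrt (real tt / real N)" and "cos \<theta> = sqrt (1 - real tt / real N)"
proof -
  define \<sigma> where "\<sigma> = sqrt (real tt)"
  define \<kappa> where "\<kappa> = sqrt (real N - real tt)"
  define \<nu> where "\<nu> = sqrt (real N)"
  have pos: "\<sigma> > 0" "\<kappa> > 0" "\<nu> > 0" unfolding \<sigma>_def \<kappa>_def \<nu>_def using t1 tN by auto
  have sq: "\<sigma>\<^sup>2 = real tt" "\<kappa>\<^sup>2 = real N - real tt" "\<nu>\<^sup>2 = real N"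
    unfolding \<sigma>_def \<kappa>_def \<nu>_def using tN by auto
  have nu: "\<nu>\<^sup>2 = \<sigma>\<^sup>2 + \<kappa>\<^sup>2" using sq by simp
  have r01: "0 \<le> real tt / real N" "real tt / real N \<le> 1" using tN by auto
  have "0 \<le> sqrt (real tt / real N)" using r01 by simp
  then have m1: "-1 \<le> sqrt (real tt / real N)" "sqrt (real tt / real N) \<le> 1" using r01 by (linarith, simp)
  show st0: "sin \<theta> = sqrt (real tt / real N)" unfolding \<theta>_def using m1 by simp
  show ct0: "cos \<theta> = sqrt (1 - real tt / real N)" unfolding \<theta>_def using r01 m1
    by (simp add: cos_arcsin)
  have st: "sin \<theta> = \<sigma> / \<nu>" unfolding st0 \<sigma>_def \<nu>_def by (simp add: real_sqrt_divide)
  have ct: "cos \<theta> = \<kappa> / \<nu>"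
  proof -
    have "1 - real tt / real N = (real N - real tt) / real N" using tN by (simp add: field_simps)
    then show ?thesis unfolding ct0 \<kappa>_def \<nu>_def by (simp add: real_sqrt_divide)
  qed
  have amp_eq: "amp j = (sin ((2 * real j + 1) * \<theta>) / \<sigma>, cos ((2 * real j + 1) * \<theta>) / \<kappa>)" for j
  proof (induction j)
    case 0
    show ?case unfolding amp_def c0_def using st ct pos \<nu>_def by simp
  next
    case (Suc j)
    have e: "(2 * real (Suc j) + 1) * \<theta> = (2 * real j + 1) * \<theta> + 2 * \<theta>" by (simp add: algebra_simps)
    have "amp (Suc j) = stepf (amp j)" unfolding amp_def by simp
    also have "\<dots> = (sin ((2 * real (Suc j) + 1) * \<theta>) / \<sigma>, cos ((2 * real (Suc j) + 1) * \<theta>) / \<kappa>)"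
      unfolding Suc stepf_def rr_def e rot[OF pos nu st ct] sq[symmetric] by (simp add: nu)
    finally show ?case .
  qed
  show "Pj j = (sin ((2 * real j + 1) * \<theta>))\<^sup>2"
    unfolding Pj_def amp_eq using pos sq t1 by (simp add: power_divide)
qed

lemma round_supp: "y \<in> set_pmf (qsearch_round A Ainv psi M) \<Longrightarrow> fst y \<in> Sset"
  unfolding qsearch_round_def by (auto dest: set_mb_amp[THEN subsetD])

lemma rounds_supp:
  "x \<in> set_pmf (qsearch_rounds A Ainv psi Ms) \<Longrightarrow> fst x = Some b \<Longrightarrow> b \<in> Gset"
proof (induction Ms arbitrary: x)
  case Nil then show ?case by simp
next
  case (Cons M Ms)
  have "x \<in> (\<Union>y\<in>set_pmf (qsearch_round A Ainv psi M). set_pmf ((\<lambda>(b, k). if desired b then return_pmf (Some b, k)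
          else bind_pmf (qsearch_rounds A Ainv psi Ms) (\<lambda>(r, k'). return_pmf (r, k + k'))) y))"
    using Cons.prems(1) by (simp only: qsearch_rounds.simps set_bind_pmf)
  then obtain b0 k0 where y: "(b0, k0) \<in> set_pmf (qsearch_round A Ainv psi M)"
    and x: "x \<in> set_pmf (if desired b0 then return_pmf (Some b0, k0)
          else bind_pmf (qsearch_rounds A Ainv psi Ms) (\<lambda>(r, k'). return_pmf (r, k0 + k')))"
    by auto
  have bS: "b0 \<in> Sset" using round_supp[OF y] by simp
  show ?case
  proof (cases "desired b0")
    case True
    then have "b = b0" using x Cons.prems(2) by simp
    then show ?thesis using True bS unfolding Gset_def by auto
  next
    case False
    then obtain y where "y \<in> set_pmf (qsearch_rounds A Ainv psi Ms)" "fst y = fst x"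
      using x by auto
    then show ?thesis using Cons.IH Cons.prems(2) by auto
  qed
qed

lemma top_supp:
  "x \<in> set_pmf (modified_qsearch c \<tau> N A Ainv psi) \<Longrightarrow> fst x = Some b \<Longrightarrow> b \<in> Gset"
proof -
  assume x0: "x \<in> set_pmf (modified_qsearch c \<tau> N A Ainv psi)" and b: "fst x = Some b"
  from x0 obtain b0 where b0: "b0 \<in> set_pmf (measure_basis psi)"
    and x: "x \<in> set_pmf (if desired b0 then return_pmf (Some b0, 1)
       else bind_pmf (qsearch_rounds A Ainv psi (round_params c \<tau> N)) (\<lambda>(r, k). return_pmf (r, 1 + k)))"
    unfolding modified_qsearch_def by auto
  show "b \<in> Gset"
  proof (cases "desired b0")
    case True
    then have "b = b0" using x b by simp
    moreover have "b0 \<in> Sset" using set_mb_amp[of 0] b0 by auto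
    ultimately show ?thesis using True unfolding Gset_def by auto
  next
    case False
    then obtain y where "y \<in> set_pmf (qsearch_rounds A Ainv psi (round_params c \<tau> N))" "fst y = fst x"
      using x by auto
    then show ?thesis using rounds_supp b by auto
  qed
qed

definition dec :: "'n qbasis option \<times> nat \<Rightarrow> (real^'n) option \<times> nat" where
  "dec = (\<lambda>(r, k). (map_option (\<lambda>b. fx_decode_vec q (fst b)) r, k))"

lemma dec_fst: "fst (dec p) = map_option (\<lambda>b. fx_decode_vec q (fst b)) (fst p)"
  by (simp add: dec_def split_def)

lemma pii_fst: "fst (pii p) = (fst p \<noteq> None)"
  by (simp add: pii_def)

lemma qss_eq: "quantum_search_step c \<tau> d q f xk xs N A Ainv = map_pmf dec (modified_qsearch c \<tau> N A Ainv psi)"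
  unfolding quantum_search_step_def dec_def psi_def by simp

lemma claim1:
  assumes "(r, k) \<in> set_pmf (quantum_search_step c \<tau> d q f xk xs N A Ainv)" and "r = Some x"
  shows "x \<in> xs ` {..<N} \<and> f x < f xk"
proof -
  from assms(1) obtain y where y: "y \<in> set_pmf (modified_qsearch c \<tau> N A Ainv psi)" and e: "(r, k) = dec y"
    unfolding qss_eq by auto
  obtain r0 k0 where y0: "y = (r0, k0)" by (cases y)
  then have r: "r = map_option (\<lambda>b. fx_decode_vec q (fst b)) r0" using e by (simp add: dec_def)
  then have "r0 \<noteq> None" using assms(2) by (cases r0) simp_all
  then obtain b where r0: "r0 = Some b" by (metis option.exhaust)
  then have xb: "x = fx_decode_vec q (fst b)" using r assms(2) by simp
  have b: "fst y = Some b" using y0 r0 by simp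
  have "b \<in> Gset" using top_supp[OF y b] .
  then obtain j where j: "j < N" "f (xs j) < f xk" "b = enc (xs j)" unfolding Gset_eq by auto
  then have "x = xs j" using xb decode_enc by simp
  then show ?thesis using j by auto
qed

lemma E_qss:
  assumes c: "1 \<le> c"
  shows "measure_pmf.expectation (quantum_search_step c \<tau> d q f xk xs N A Ainv) (\<lambda>(r, k). real k)
     = 1 + (1 - real tt / real N) * ecost Pj (round_params c \<tau> N)"
proof -
  let ?X = "modified_qsearch c \<tau> N A Ainv psi"
  have "measure_pmf.expectation (quantum_search_step c \<tau> d q f xk xs N A Ainv) (\<lambda>(r, k). real k)
      = measure_pmf.expectation ?X (\<lambda>x. real (snd x))"
    unfolding qss_eq by (simp add: dec_def split_def)
  also have "\<dots> = measure_pmf.expectation (map_pmf pii ?X) (\<lambda>x. real (snd x))"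
    by (simp add: pii_def)
  also have "\<dots> = 1 + (1 - real tt / real N) * ecost Pj (round_params c \<tau> N)"
    unfolding top_abs using E_top_cost[OF round_params_ge1[OF c] Pj_bounds] Pj0 by simp
  finally show ?thesis .
qed

lemma F_qss:
  assumes c: "1 \<le> c"
  shows "measure_pmf.prob (quantum_search_step c \<tau> d q f xk xs N A Ainv) {p. fst p = None}
     = (1 - real tt / real N) * fprob Pj (round_params c \<tau> N)"
proof -
  let ?X = "modified_qsearch c \<tau> N A Ainv psi"
  have "measure_pmf.prob (quantum_search_step c \<tau> d q f xk xs N A Ainv) {p. fst p = None}
      = measure_pmf.prob ?X {p. fst p = None}"
    unfolding qss_eq measure_map_pmf by (rule arg_cong[where f="measure_pmf.prob ?X"]) (rule set_eqI, simp only: vimage_eq mem_Collect_eq dec_fst map_option_is_None)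
  also have "\<dots> = measure_pmf.prob (map_pmf pii ?X) {p. fst p = False}"
    unfolding measure_map_pmf by (rule arg_cong[where f="measure_pmf.prob ?X"]) (rule set_eqI, simp only: vimage_eq mem_Collect_eq pii_fst, blast)
  also have "\<dots> = (1 - real tt / real N) * fprob Pj (round_params c \<tau> N)"
    unfolding top_abs using E_top_fail[OF round_params_ge1[OF c] Pj_bounds] Pj0 by simp
  finally show ?thesis .
qed

end

definition C2c :: "real \<Rightarrow> real" where
  "C2c c = 1 + (16 / (2 - c) + 4 / (c - 1)) * c * (1 + c * (2 * c / (2 - c)) / 2)"

definition C1c :: "real \<Rightarrow> real" where
  "C1c c = 3 * ((c - 1) / 8) / (8 * c)"

context qss begin

definition th :: real where "th = arcsin (sqrt (real tt / real N))"

lemma trig_facts: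
  assumes t1: "1 \<le> tt" and tN: "tt < N"
  shows "sin th = sqrt (real tt / real N)" "cos th = sqrt (1 - real tt / real N)"
    "0 < sin th" "sin th \<le> 1" "0 < cos th" "cos th \<le> 1"
    "(sin th)\<^sup>2 = real tt / real N" "(cos th)\<^sup>2 = 1 - real tt / real N"
    "sin (2 * th) = 2 * sin th * cos th" "Pj = (\<lambda>j. (sin ((2 * real j + 1) * th))\<^sup>2)"
proof -
  have r: "0 < real tt / real N" "real tt / real N < 1" using t1 tN by auto
  show s: "sin th = sqrt (real tt / real N)" unfolding th_def using Pj_sin(2)[OF t1 tN] .
  show c: "cos th = sqrt (1 - real tt / real N)" unfolding th_def using Pj_sin(3)[OF t1 tN] .
  show "0 < sin th" "sin th \<le> 1" "0 < cos th" "cos th \<le> 1" unfolding s c using r by auto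
  show "(sin th)\<^sup>2 = real tt / real N" "(cos th)\<^sup>2 = 1 - real tt / real N" unfolding s c using r by auto
  show "sin (2 * th) = 2 * sin th * cos th" by (rule sin_double)
  show "Pj = (\<lambda>j. (sin ((2 * real j + 1) * th))\<^sup>2)" unfolding th_def using Pj_sin(1)[OF t1 tN] by (rule ext)
qed

lemma Qbound:
  assumes c1: "1 < c" and c2: "c < 2" and t1: "1 \<le> tt" and tN: "tt < N"
  shows "\<exists>L0. (\<forall>i. L0 \<le> i \<longrightarrow> 1 - pavg Pj (Mseq c i) \<le> (c + 2) / (4 * c)) \<and>
     c ^ L0 \<le> 1 + c * (2 * c / (2 - c)) / sin (2 * th)"
proof -
  define K where "K = 2 * c / (2 - c)"
  have K0: "0 < K" unfolding K_def using c1 c2 by simp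
  have s2: "0 < sin (2 * th)" using trig_facts[OF t1 tN] by simp
  define X where "X = K / sin (2 * th)"
  have X0: "0 < X" unfolding X_def using K0 s2 by simp
  have ex: "\<exists>l. X \<le> c ^ l" using real_arch_pow[OF c1, of X] by (meson less_imp_le)
  define L0 where "L0 = (LEAST l. X \<le> c ^ l)"
  have L0X: "X \<le> c ^ L0" unfolding L0_def by (rule LeastI_ex[OF ex])
  have Q: "1 - pavg Pj (Mseq c i) \<le> (c + 2) / (4 * c)" if i: "L0 \<le> i" for i
  proof -
    have "c ^ L0 \<le> c ^ i" using i c1 by (intro power_increasing) auto
    then have MX: "X \<le> real (Mseq c i)" using L0X Mseq_props(1)[of c i] c1 by linarith
    have M1: "1 \<le> Mseq c i" using Mseq_props(4)[of c i] c1 by simp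
    have "1 - pavg Pj (Mseq c i) \<le> 1/2 + 1 / (2 * real (Mseq c i) * sin (2 * th))"
      unfolding trig_facts(10)[OF t1 tN] by (rule pavg_sin_upper[OF M1 s2])
    also have "\<dots> \<le> 1/2 + 1 / (2 * X * sin (2 * th))"
      using MX X0 s2 by (intro add_left_mono divide_left_mono mult_right_mono mult_left_mono mult_pos_pos) auto
    also have "\<dots> = (c + 2) / (4 * c)"
      unfolding X_def K_def using s2 c1 c2 by (simp add: field_simps)
    finally show ?thesis .
  qed
  have cL: "c ^ L0 \<le> 1 + c * X"
  proof (cases L0)
    case 0 then show ?thesis using X0 c1 by simp
  next
    case (Suc l)
    have "l < (LEAST l. X \<le> c ^ l)" using Suc[unfolded L0_def] by simp
    then have "\<not> X \<le> c ^ l" by (rule not_less_Least)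
    then have "c ^ L0 \<le> c * X" unfolding Suc using c1 by simp
    then show ?thesis by simp
  qed
  show ?thesis using Q cL unfolding X_def K_def by (intro exI[of _ L0]) (simp add: mult.assoc)
qed

lemma upper_bound:
  assumes c1: "1 < c" and c2: "c < 2" and t1: "1 \<le> tt"
  shows "1 + (1 - real tt / real N) * ecost Pj (round_params c \<tau> N) \<le> C2c c * sqrt (real N / real tt)"
proof (cases "tt = N")
  case True
  have "1 \<le> C2c c" unfolding C2c_def using c1 c2 by simp
  then show ?thesis using True Npos by simp
next
  case False
  then have tN: "tt < N" using tt_le by simp
  note tf = trig_facts[OF t1 tN]
  define s where "s = sin th"
  define co where "co = cos th"
  define K where "K = 2 * c / (2 - c)"
  define Z where "Z = 16 / (2 - c) + 4 / (c - 1)"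
  have s0: "0 < s" "s \<le> 1" and co0: "0 < co" "co \<le> 1" using tf unfolding s_def co_def by auto
  have K0: "0 < K" unfolding K_def using c1 c2 by simp
  have Z0: "0 < Z" unfolding Z_def using c1 c2 by (intro add_pos_pos divide_pos_pos) auto
  obtain L0 where Q: "\<And>i. L0 \<le> i \<Longrightarrow> 1 - pavg Pj (Mseq c i) \<le> (c + 2) / (4 * c)"
    and cL: "c ^ L0 \<le> 1 + c * K / (2 * s * co)"
    using Qbound[OF c1 c2 t1 tN] tf(9) unfolding K_def s_def co_def by (auto simp: mult.assoc)
  define R where "R = num_rounds c \<tau> N"
  have ec: "ecost Pj (round_params c \<tau> N) \<le> Z * c ^ (L0 + 1)"
  proof -
    have "ecost Pj (round_params c \<tau> N) \<le>
      (if L0 + 1 \<le> 1 then 16 / (2 - c) * c ^ 1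
       else 16 / (2 - c) * c ^ (L0 + 1) + 4 * (c ^ (L0 + 1) - c ^ 1) / (c - 1))"
      unfolding round_params_Mseq by (rule ecost_upper[OF c1 c2 Pj_bounds Q])
    also have "\<dots> \<le> Z * c ^ (L0 + 1)"
    proof (cases "L0 = 0")
      case True
      have "0 \<le> 4 / (c - 1) * c" using c1 by simp
      then show ?thesis using True unfolding Z_def by (simp add: distrib_right)
    next
      case False
      have "4 * (c ^ (L0 + 1) - c ^ 1) / (c - 1) \<le> 4 * c ^ (L0 + 1) / (c - 1)"
        using c1 by (intro divide_right_mono) auto
      then show ?thesis using False unfolding Z_def by (simp add: distrib_right)
    qed
    finally show ?thesis .
  qed
  have "1 + (1 - real tt / real N) * ecost Pj (round_params c \<tau> N) = 1 + co\<^sup>2 * ecost Pj (round_params c \<tau> N)"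
    using tf(8) unfolding co_def by simp
  also have "\<dots> \<le> 1 + co\<^sup>2 * (Z * c * (1 + c * K / (2 * s * co)))"
  proof -
    have "Z * c ^ (L0 + 1) \<le> Z * c * (1 + c * K / (2 * s * co))"
      using cL Z0 c1 by (simp add: mult_left_mono)
    then have "ecost Pj (round_params c \<tau> N) \<le> Z * c * (1 + c * K / (2 * s * co))" using ec by linarith
    then show ?thesis by (simp add: mult_left_mono)
  qed
  also have "1 + co\<^sup>2 * (Z * c * (1 + c * K / (2 * s * co))) = 1 + Z * c * (co\<^sup>2 + co * (c * K / 2) / s)"
    using s0 co0 by (simp add: field_simps power2_eq_square)
  also have "\<dots> \<le> 1 + Z * c * (1 + (c * K / 2) / s)"
  proof -
    have "co\<^sup>2 \<le> 1" using co0 by (simp add: power_le_one)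
    moreover have "co * (c * K / 2) / s \<le> (c * K / 2) / s"
      using co0 s0 K0 c1 by (intro divide_right_mono) (auto simp: mult_left_le_one_le)
    ultimately show ?thesis using Z0 c1 by (intro add_left_mono mult_left_mono) auto
  qed
  also have "\<dots> \<le> 1 + Z * c * ((1 + c * K / 2) / s)"
  proof -
    have "1 \<le> 1 / s" using s0 by simp
    then have "1 + (c * K / 2) / s \<le> (1 + c * K / 2) / s" by (simp add: add_divide_distrib)
    then show ?thesis using Z0 c1 by (intro add_left_mono mult_left_mono) auto
  qed
  finally have E1: "1 + (1 - real tt / real N) * ecost Pj (round_params c \<tau> N) \<le> 1 + Z * c * ((1 + c * K / 2) / s)" .
  also have "\<dots> \<le> 1 / s + Z * c * ((1 + c * K / 2) / s)" using s0 by simp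
  also have "\<dots> = C2c c * (1 / s)" unfolding C2c_def Z_def K_def using s0 by (simp add: field_simps)
  also have "1 / s = sqrt (real N / real tt)" unfolding s_def tf(1) by (simp add: real_sqrt_divide)
  finally show ?thesis .
qed

end

context qss begin

lemma lower_bound:
  assumes c1: "1 < c" and c2: "c < 2" and t1: "1 \<le> tt" and \<tau>0: "0 < \<tau>" and \<tau>1: "\<tau> < 1"
  shows "C1c c * sqrt (real N / real tt) \<le> 1 + (1 - real tt / real N) * ecost Pj (round_params c \<tau> N)"
proof -
  define s where "s = sqrt (real tt / real N)"
  define \<delta> where "\<delta> = (c - 1) / 8"
  define E where "E = 1 + (1 - real tt / real N) * ecost Pj (round_params c \<tau> N)"
  have TN: "real tt \<le> real N" using tt_le by simp
  have s0: "0 < s" "s \<le> 1" unfolding s_def using t1 TN Npos by auto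
  have ssq: "s\<^sup>2 = real tt / real N" unfolding s_def using Npos by simp
  have sqN: "sqrt (real N / real tt) = 1 / s" unfolding s_def by (simp add: real_sqrt_divide)
  have \<delta>0: "0 < \<delta>" "\<delta> \<le> 1/8" unfolding \<delta>_def using c1 c2 by auto
  have C1eq: "C1c c = 3 * \<delta> / (8 * c)" unfolding C1c_def \<delta>_def by simp
  have C10: "0 < C1c c" unfolding C1eq using \<delta>0 c1 by simp
  have ec0: "0 \<le> ecost Pj (round_params c \<tau> N)" by (rule ecost_nonneg[OF Pj_bounds])
  have E1: "1 \<le> E" unfolding E_def using ec0 TN Npos by (simp add: divide_le_eq_1)
  show ?thesis unfolding E_def[symmetric] sqN
  proof (cases "s > 1/2 \<or> \<delta> < c * s")
    case True
    have "C1c c * (1 / s) \<le> 1"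
    proof (cases "s > 1/2")
      case True
      have "1 / s < 2" using True by (simp add: field_simps)
      moreover have "C1c c \<le> 1/2" unfolding C1eq using \<delta>0 c1 by (simp add: field_simps)
      ultimately have "C1c c * (1 / s) \<le> 1/2 * 2" using C10 s0
        by (intro mult_mono) auto
      then show ?thesis by simp
    next
      case False
      then have "\<delta> < c * s" using \<open>s > 1/2 \<or> \<delta> < c * s\<close> by simp
      then have "1 / s \<le> c / \<delta>" using s0 \<delta>0 c1 by (simp add: field_simps)
      then have "C1c c * (1 / s) \<le> C1c c * (c / \<delta>)" by (rule mult_left_mono) (use C10 in simp)
      also have "\<dots> = 3 / 8" unfolding C1eq using \<delta>0 c1 by (simp add: field_simps)
      finally show ?thesis by linarith
    qed
    then show "C1c c * (1 / s) \<le> E" using E1 by simp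
  next
    case False
    then have sh: "s \<le> 1/2" and cs: "c * s \<le> \<delta>" by auto
    have "s\<^sup>2 \<le> (1/2)\<^sup>2" by (rule power_mono) (use sh s0 in auto)
    then have "real tt / real N \<le> 1/4" using ssq by (simp add: power2_eq_square)
    then have tN: "tt < N" and N4: "4 \<le> real N" using t1 Npos by (auto simp: field_simps)
    note tf = trig_facts[OF t1 tN]
    have sth: "sin th = s" using tf(1) unfolding s_def .
    have ex: "\<exists>l. \<delta> < c ^ l * s"
    proof -
      obtain n where "\<delta> / s < c ^ n" using real_arch_pow[OF c1] by blast
      then show ?thesis using s0 by (auto simp: field_simps)
    qed
    define L where "L = (LEAST l. \<delta> < c ^ l * s)"
    have hL: "\<delta> < c ^ L * s" unfolding L_def by (rule LeastI_ex[OF ex])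
    have L2: "2 \<le> L"
    proof (rule ccontr)
      assume "\<not> 2 \<le> L"
      then have "L = 0 \<or> L = 1" by auto
      moreover have "s \<le> c * s" using c1 s0 by simp
      ultimately show False using hL cs by auto
    qed
    define ls where "ls = L - 1"
    have ls1: "1 \<le> ls" unfolding ls_def using L2 by simp
    have hls: "c ^ ls * s \<le> \<delta>"
    proof -
      have "ls < (LEAST l. \<delta> < c ^ l * s)" unfolding ls_def L_def[symmetric] using L2 by simp
      then have "\<not> \<delta> < c ^ ls * s" by (rule not_less_Least)
      then show ?thesis by simp
    qed
    have hls2: "\<delta> < c * (c ^ ls * s)"
    proof -
      have "L = Suc ls" unfolding ls_def using L2 by simp
      then show ?thesis using hL by (simp add: mult.assoc)
    qed
    define R where "R = num_rounds c \<tau> N"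
    have \<beta>: "0 < ln \<tau> / ln (3/4)" using \<tau>0 \<tau>1 by (intro divide_neg_neg) auto
    obtain i where i: "i \<in> {1..R}" "sqrt (real N) < real_of_int \<lceil>c ^ i\<rceil>"
      using num_rounds_big[OF c1 \<beta>, of N] unfolding R_def by blast
    have lsR: "ls \<le> R"
    proof (rule ccontr)
      assume "\<not> ls \<le> R"
      then have "i \<le> ls" using i by auto
      then have "c ^ i \<le> c ^ ls" using c1 by (intro power_increasing) auto
      then have "\<lceil>c ^ i\<rceil> \<le> \<lceil>c ^ ls\<rceil>" by (rule ceiling_mono)
      then have A: "sqrt (real N) < c ^ ls + 1" using i(2) by linarith
      have "c ^ ls \<le> \<delta> / s" using hls s0 by (simp add: field_simps)
      also have "\<delta> / s = \<delta> * sqrt (real N / real tt)" unfolding sqN by simp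
      also have "\<dots> \<le> \<delta> * sqrt (real N)"
      proof -
        have "real N / real tt \<le> real N" using t1 Npos by (simp add: field_simps)
        then show ?thesis using \<delta>0 by (intro mult_left_mono) auto
      qed
      finally have B: "c ^ ls \<le> \<delta> * sqrt (real N)" .
      have "2 \<le> sqrt (real N)" using N4 real_sqrt_le_mono[OF N4] by simp
      moreover have "\<delta> * sqrt (real N) \<le> 1/8 * sqrt (real N)" using \<delta>0 by (intro mult_right_mono) auto
      ultimately show False using A B by linarith
    qed
    have low: "(1 - (\<Sum>i\<in>{1..<ls}. pavg Pj (Mseq c i))) * c ^ ls \<le> ecost Pj (round_params c \<tau> N)"
      unfolding round_params_Mseq R_def[symmetric] using ecost_lower[OF Pj_bounds, of c 1 ls "R + 1"] c1 ls1 lsR by simp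
    have pterm: "pavg Pj (Mseq c i) \<le> 25 * s\<^sup>2 * (c\<^sup>2) ^ i" for i
    proof -
      have "pavg Pj (Mseq c i) \<le> (2 * real (Mseq c i) + 1)\<^sup>2 * s\<^sup>2"
        unfolding tf(10) sth[symmetric] by (rule pavg_sin_lower)
      also have "\<dots> \<le> (5 * c ^ i)\<^sup>2 * s\<^sup>2"
      proof -
        have "2 * real (Mseq c i) + 1 \<le> 5 * c ^ i"
          using Mseq_props(2)[of c i] one_le_power[of c i] c1 by linarith
        then show ?thesis by (intro mult_right_mono power_mono) auto
      qed
      also have "\<dots> = 25 * s\<^sup>2 * (c\<^sup>2) ^ i" by (simp add: power_mult_distrib power_mult[symmetric] mult.commute)
      finally show ?thesis .
    qed
    have sumb: "(\<Sum>i\<in>{1..<ls}. pavg Pj (Mseq c i)) \<le> 1/2"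
    proof -
      have c21: "1 < c\<^sup>2" using c1 by (simp add: one_less_power)
      have "(\<Sum>i\<in>{1..<ls}. pavg Pj (Mseq c i)) \<le> (\<Sum>i\<in>{1..<ls}. 25 * s\<^sup>2 * (c\<^sup>2) ^ i)"
        by (rule sum_mono) (rule pterm)
      also have "\<dots> \<le> (\<Sum>i\<in>{..<ls}. 25 * s\<^sup>2 * (c\<^sup>2) ^ i)"
        by (rule sum_mono2) auto
      also have "\<dots> = 25 * s\<^sup>2 * (((c\<^sup>2) ^ ls - 1) / (c\<^sup>2 - 1))"
        using c21 by (simp add: sum_distrib_left[symmetric] geometric_sum)
      also have "\<dots> \<le> 25 * s\<^sup>2 * ((c\<^sup>2) ^ ls / (c\<^sup>2 - 1))"
        using c21 by (intro mult_left_mono divide_right_mono) auto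
      also have "\<dots> = 25 * (c ^ ls * s)\<^sup>2 / (c\<^sup>2 - 1)"
        by (simp add: power_mult_distrib power_mult[symmetric] mult.commute)
      also have "\<dots> \<le> 25 * \<delta>\<^sup>2 / (c\<^sup>2 - 1)"
      proof -
        have "(c ^ ls * s)\<^sup>2 \<le> \<delta>\<^sup>2" using hls s0 c1 by (intro power_mono) auto
        then show ?thesis using c21 by (intro divide_right_mono) auto
      qed
      also have "\<dots> \<le> 1/2"
      proof -
        have c2p: "0 < c\<^sup>2 - 1" using c21 by simp
        have d2: "\<delta>\<^sup>2 = (c - 1) * (c - 1) / 64" unfolding \<delta>_def by (simp add: power2_eq_square)
        have m: "(c - 1) * (c - 1) \<le> (c - 1) * (c + 1)" using c1 by (intro mult_left_mono) auto
        have e: "(c - 1) * (c + 1) = c\<^sup>2 - 1" by (simp add: power2_eq_square algebra_simps)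
        have gen: "25 * (u / 64) \<le> 1/2 * (x - 1)" if "u \<le> x - 1" "0 < x - 1" for u x :: real
          using that by argo
        have "25 * \<delta>\<^sup>2 \<le> 1/2 * (c\<^sup>2 - 1)" unfolding d2 using gen[of _ "c\<^sup>2"] m e c2p by simp
        then show ?thesis using c2p by (simp add: pos_divide_le_eq)
      qed
      finally show ?thesis .
    qed
    have hE: "1/2 * c ^ ls \<le> ecost Pj (round_params c \<tau> N)"
    proof -
      have "1/2 * c ^ ls \<le> (1 - (\<Sum>i\<in>{1..<ls}. pavg Pj (Mseq c i))) * c ^ ls"
        using sumb c1 by (intro mult_right_mono) auto
      then show ?thesis using low by linarith
    qed
    have h34: "3/4 \<le> 1 - real tt / real N" using \<open>real tt / real N \<le> 1/4\<close> by linarith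
    have p1: "0 \<le> 1/2 * c ^ ls" using c1 by simp
    have p2: "0 \<le> 1 - real tt / real N" using h34 by linarith
    have "3/4 * (1/2 * c ^ ls) \<le> (1 - real tt / real N) * ecost Pj (round_params c \<tau> N)"
      by (rule mult_mono[OF h34 hE p2 p1])
    moreover have "C1c c * (1 / s) \<le> 3/4 * (1/2 * c ^ ls)"
    proof -
      have "\<delta> / (c * s) < c ^ ls" using hls2 s0 c1 by (simp add: field_simps)
      then have "3/8 * (\<delta> / (c * s)) \<le> 3/8 * c ^ ls" by simp
      moreover have "C1c c * (1 / s) = 3/8 * (\<delta> / (c * s))" unfolding C1eq by (simp add: field_simps)
      ultimately show ?thesis by simp
    qed
    ultimately show "C1c c * (1 / s) \<le> E" unfolding E_def using ec0 by linarith
  qed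
qed

lemma fail_bound:
  assumes c1: "1 < c" and c2: "c < 2" and t1: "1 \<le> tt" and \<epsilon>: "0 < \<epsilon>"
  shows "\<exists>\<tau>0>0. \<forall>\<tau>. 0 < \<tau> \<and> \<tau> \<le> \<tau>0 \<longrightarrow> (1 - real tt / real N) * fprob Pj (round_params c \<tau> N) \<le> \<epsilon>"
proof (cases "tt = N")
  case True
  then show ?thesis using Npos \<epsilon> by (intro exI[of _ 1]) auto
next
  case False
  then have tN: "tt < N" using tt_le by simp
  obtain L0 where Q: "\<And>i. L0 \<le> i \<Longrightarrow> 1 - pavg Pj (Mseq c i) \<le> (c + 2) / (4 * c)"
    using Qbound[OF c1 c2 t1 tN] by blast
  define qq where "qq = (c + 2) / (4 * c)"
  have qq: "0 \<le> qq" "qq < 1" unfolding qq_def using c1 by (auto simp: field_simps)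
  obtain n0 where n0: "qq ^ n0 < \<epsilon>" using real_arch_pow_inv[OF \<epsilon> qq(2)] by blast
  define \<tau>0 where "\<tau>0 = (3/4 :: real) ^ (L0 + n0 + 1)"
  have \<tau>0p: "0 < \<tau>0" unfolding \<tau>0_def by simp
  show ?thesis
  proof (intro exI[of _ \<tau>0] conjI allI impI)
    show "0 < \<tau>0" by (rule \<tau>0p)
    fix \<tau> :: real assume \<tau>: "0 < \<tau> \<and> \<tau> \<le> \<tau>0"
    define R where "R = num_rounds c \<tau> N"
    have "ln \<tau> \<le> ln \<tau>0" using \<tau> \<tau>0p by simp
    also have "ln \<tau>0 = real (L0 + n0 + 1) * ln (3/4)" unfolding \<tau>0_def by (rule ln_realpow)
    finally have "real (L0 + n0 + 1) * ln (3/4) / ln (3/4) \<le> ln \<tau> / ln (3/4)"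
      by (rule divide_right_mono_neg) simp
    then have "real (L0 + n0 + 1) \<le> ln \<tau> / ln (3/4)" by simp
    also have "\<dots> \<le> real R" unfolding R_def by (rule num_rounds_ge[OF c1])
    finally have RL: "L0 + n0 + 1 \<le> R" by linarith
    have "fprob Pj (round_params c \<tau> N) \<le> qq ^ (R + 1 - max 1 L0)"
      unfolding round_params_Mseq R_def[symmetric] qq_def by (rule fprob_upper[OF Pj_bounds]) (use qq Q in \<open>auto simp: qq_def\<close>)
    also have "\<dots> \<le> qq ^ n0" using qq RL by (intro power_decreasing) auto
    finally have fp: "fprob Pj (round_params c \<tau> N) \<le> qq ^ n0" .
    have f0: "0 \<le> fprob Pj (round_params c \<tau> N)" using fprob_bounds[of Pj, OF Pj_bounds] by blast
    have h1: "0 \<le> 1 - real tt / real N" using tt_le Npos by (simp add: divide_le_eq_1)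
    have h2: "1 - real tt / real N \<le> 1" by simp
    have "(1 - real tt / real N) * fprob Pj (round_params c \<tau> N) \<le> fprob Pj (round_params c \<tau> N)"
      by (rule mult_left_le_one_le[OF f0 h1 h2])
    then show "(1 - real tt / real N) * fprob Pj (round_params c \<tau> N) \<le> \<epsilon>" using fp n0 by linarith
  qed
qed

end

lemma part1_inst:
  fixes f :: "real^'n::finite \<Rightarrow> real" and D :: "real^'p::finite^'n" and \<tau> c :: real
  assumes c1: "1 < c" and c2: "c < 2" and h: "qss_hyps f xk \<Delta> D G zs xs N d q A Ainv" and \<tau>0: "0 < \<tau>"
  shows "let P = quantum_search_step c \<tau> d q f xk xs N A Ainv;
            t = improved_count f xk xs N;
            E = measure_pmf.expectation P (\<lambda>(r, k). real k)
        in (\<forall>r k x. (r, k) \<in> set_pmf P \<longrightarrow> r = Some x \<longrightarrow> x \<in> xs ` {..<N} \<and> f x < f xk) \<and>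
           (1 \<le> t \<longrightarrow> E \<le> C2c c * sqrt (real N / real t)) \<and>
           (1 \<le> t \<and> \<tau> < 1 \<longrightarrow> C1c c * sqrt (real N / real t) \<le> E)"
proof -
  interpret Q: qss f xk \<Delta> D G zs xs N d q A Ainv using h by unfold_locales
  have t: "improved_count f xk xs N = Q.tt" unfolding Q.tt_def ..
  have E: "measure_pmf.expectation (quantum_search_step c \<tau> d q f xk xs N A Ainv) (\<lambda>(r, k). real k)
     = 1 + (1 - real Q.tt / real N) * ecost Q.Pj (round_params c \<tau> N)"
    using Q.E_qss c1 by simp
  show ?thesis
    unfolding Let_def t E
    using Q.claim1 Q.upper_bound[OF c1 c2] Q.lower_bound[OF c1 c2 _ \<tau>0] by blast
qed

lemma part2_inst:
  fixes f :: "real^'n::finite \<Rightarrow> real" and D :: "real^'p::finite^'n" and c \<epsilon> :: real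
  assumes c1: "1 < c" and c2: "c < 2" and h: "qss_hyps f xk \<Delta> D G zs xs N d q A Ainv"
    and t1: "1 \<le> improved_count f xk xs N" and \<epsilon>: "0 < \<epsilon>"
  shows "\<exists>\<tau>0>0. \<forall>\<tau>. 0 < \<tau> \<and> \<tau> \<le> \<tau>0 \<longrightarrow>
            measure_pmf.prob (quantum_search_step c \<tau> d q f xk xs N A Ainv) {p. fst p = None} \<le> \<epsilon>"
proof -
  interpret Q: qss f xk \<Delta> D G zs xs N d q A Ainv using h by unfold_locales
  have t1': "1 \<le> Q.tt" using t1 unfolding Q.tt_def by simp
  obtain \<tau>0 where \<tau>0: "0 < \<tau>0" and H: "\<And>\<tau>. 0 < \<tau> \<and> \<tau> \<le> \<tau>0 \<Longrightarrow>
      (1 - real Q.tt / real N) * fprob Q.Pj (round_params c \<tau> N) \<le> \<epsilon>"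
    using Q.fail_bound[OF c1 c2 t1' \<epsilon>] by blast
  show ?thesis
    using \<tau>0 H Q.F_qss c1 by (intro exI[of _ \<tau>0]) auto
qed

theorem theorem2:
  fixes c :: real
  assumes "1 < c" and "c < 2"
  shows
   "(\<exists>C1>0. \<exists>C2>0. \<forall>(f :: real^'n \<Rightarrow> real) xk \<Delta> (D :: real^'p^'n) G zs xs N d q A Ainv \<tau>.
       qss_hyps f xk \<Delta> D G zs xs N d q A Ainv \<and> 0 < \<tau> \<longrightarrow>
       (let P = quantum_search_step c \<tau> d q f xk xs N A Ainv;
            t = improved_count f xk xs N;
            E = measure_pmf.expectation P (\<lambda>(r, k). real k)
        in (\<forall>r k x. (r, k) \<in> set_pmf P \<longrightarrow> r = Some x \<longrightarrow> x \<in> xs ` {..<N} \<and> f x < f xk) \<and>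
           (1 \<le> t \<longrightarrow> E \<le> C2 * sqrt (real N / real t)) \<and>
           (1 \<le> t \<and> \<tau> < 1 \<longrightarrow> C1 * sqrt (real N / real t) \<le> E)))
    \<and> (\<forall>(f :: real^'n \<Rightarrow> real) xk \<Delta> (D :: real^'p^'n) G zs xs N d q A Ainv.
         qss_hyps f xk \<Delta> D G zs xs N d q A Ainv \<and> 1 \<le> improved_count f xk xs N \<longrightarrow>
         (\<forall>\<epsilon>>0. \<exists>\<tau>0>0. \<forall>\<tau>. 0 < \<tau> \<and> \<tau> \<le> \<tau>0 \<longrightarrow>
            measure_pmf.prob (quantum_search_step c \<tau> d q f xk xs N A Ainv) {p. fst p = None} \<le> \<epsilon>))"
proof -
  note c1 = assms(1) and c2 = assms(2)
  have C10: "0 < C1c c" unfolding C1c_def using c1 by simp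
  have C20: "0 < C2c c"
  proof -
    have "0 \<le> (16 / (2 - c) + 4 / (c - 1)) * c * (1 + c * (2 * c / (2 - c)) / 2)"
      using c1 c2 by (intro mult_nonneg_nonneg add_nonneg_nonneg divide_nonneg_nonneg) auto
    then show ?thesis unfolding C2c_def by simp
  qed
  show ?thesis
    apply (rule conjI)
     apply (rule exI[of _ "C1c c"], rule conjI[OF C10])
     apply (rule exI[of _ "C2c c"], rule conjI[OF C20])
     apply (intro allI impI, elim conjE)
     apply (rule part1_inst[OF c1 c2], assumption+)
    apply (intro allI impI, elim conjE)
    apply (rule part2_inst[OF c1 c2], assumption+)
    done
qed

end
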